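(* For $N\ge1$, \[Z_N(\{u\}_N|\{w\}_N)=\prod_{j=1}^N(1-t)cu_j\prod_{1\le j<k\le N}\frac{tu_j-u_k}{u_j-u_k}\sum_{\sigma\in S_N}\prod_{(j,k)\in\mathrm{Inv}(\sigma)}\frac{u_{\sigma(k)}-tu_{\sigma(j)}}{tu_{\sigma(k)}-u_{\sigma(j)}}\prod_{1\le j<k\le N}(au_{\sigma(j)}+bw_k)\prod_{1\le k<j\le N}(eu_{\sigma(j)}+fw_k)\] as rational functions of $u_1,\dots,u_N,w_1,\dots,w_N$.
   Context: Fix complex parameters $t,a,b,c,d,e,f$, all nonzero, with $t\neq1$, satisfying $cd+af=0$ and $tcd+be=0$. The inhomogeneous $L$-operator $L_{aj}(u,w)$ on $W_a\otimes V_j$ ($\cong\mathbb{C}^2\otimes\mathbb{C}^2$, basis $|0\rangle,|1\rangle$) has matrix elements ${}_a\langle\gamma|{}_j\langle\delta|L_{aj}(u,w)|\alpha\rangle_a|\beta\rangle_j=[L(u,w)]^{\gamma\delta}_{\alpha\beta}$: $[L]^{00}_{00}=au+bw$, $[L]^{01}_{01}=atu+bw$, $[L]^{01}_{10}=(1-t)cu$, $[L]^{10}_{01}=(1-t)dw$, $[L]^{10}_{10}=eu+fw$, $[L]^{11}_{11}=eu+tfw$, all others $0$. Define $B_N(u|\{w\}_N)={}_a\langle0|L_{aN}(u,w_N)\cdots L_{a1}(u,w_1)|1\rangle_a$ on $V_1\otimes\cdots\otimes V_N$ and $Z_N(\{u\}_N|\{w\}_N)=\langle1\cdots N|B_N(u_1|\{w\}_N)\cdots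 B_N(u_N|\{w\}_N)|\Omega\rangle$ with $|\Omega\rangle=|0\rangle^{\otimes N}$, $\langle1\cdots N|=\langle1|^{\otimes N}$. For $\sigma\in S_N$, $\mathrm{Inv}(\sigma)=\{(j,k):j<k,\ \sigma(j)>\sigma(k)\}$. *)

theory Defs
  imports Complex_Main "HOL-Combinatorics.Permutations"
begin

text \<open>Matrix elements [L(u,w)]^{gamma delta}_{alpha beta} of the inhomogeneous L-operator,
  with gamma/alpha the outgoing/incoming auxiliary index and delta/beta the
  outgoing/incoming quantum index (all in {0,1}).\<close>
definition Lel :: "complex \<Rightarrow> complex \<Rightarrow> complex \<Rightarrow> complex \<Rightarrow> complex \<Rightarrow> complex \<Rightarrow> complex
    \<Rightarrow> complex \<Rightarrow> complex \<Rightarrow> nat \<Rightarrow> nat \<Rightarrow> nat \<Rightarrow> nat \<Rightarrow> complex" where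
  "Lel t a b c d e f u w \<gamma> \<delta> \<alpha> \<beta> =
     (if (\<gamma>, \<delta>, \<alpha>, \<beta>) = (0,0,0,0) then a*u + b*w
      else if (\<gamma>, \<delta>, \<alpha>, \<beta>) = (0,1,0,1) then a*t*u + b*w
      else if (\<gamma>, \<delta>, \<alpha>, \<beta>) = (0,1,1,0) then (1-t)*c*u
      else if (\<gamma>, \<delta>, \<alpha>, \<beta>) = (1,0,0,1) then (1-t)*d*w
      else if (\<gamma>, \<delta>, \<alpha>, \<beta>) = (1,0,1,0) then e*u + f*w
      else if (\<gamma>, \<delta>, \<alpha>, \<beta>) = (1,1,1,1) then e*u + t*f*w
      else 0)"

text \<open>Matrix element of the auxiliary-space monodromy
  L_{a,N} ... L_{a,1} between aux state alpha (in) and gamma (out); the lists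
  are indexed by sites 1,...,N in order (site 1 acts first).\<close>
fun Bch :: "complex \<Rightarrow> complex \<Rightarrow> complex \<Rightarrow> complex \<Rightarrow> complex \<Rightarrow> complex \<Rightarrow> complex
    \<Rightarrow> complex \<Rightarrow> complex list \<Rightarrow> nat list \<Rightarrow> nat list \<Rightarrow> nat \<Rightarrow> nat \<Rightarrow> complex" where
  "Bch t a b c d e f u [] [] [] \<alpha> \<gamma> = (if \<alpha> = \<gamma> then 1 else 0)"
| "Bch t a b c d e f u (w # ws) (\<delta> # ds) (\<beta> # bs) \<alpha> \<gamma> =
     (\<Sum>\<alpha>'\<in>{0,1}. Lel t a b c d e f u w \<alpha>' \<delta> \<alpha> \<beta> * Bch t a b c d e f u ws ds bs \<alpha>' \<gamma>)"
| "Bch t a b c d e f u _ _ _ \<alpha> \<gamma> = 0"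

definition configs :: "nat \<Rightarrow> nat list set" where
  "configs N = {xs. length xs = N \<and> set xs \<subseteq> {0,1}}"

text \<open>Action of B_N(u|{w}) (matrix element <out|B|in> = Bch ... 1 0) on a vector.\<close>
definition Bapp :: "complex \<Rightarrow> complex \<Rightarrow> complex \<Rightarrow> complex \<Rightarrow> complex \<Rightarrow> complex \<Rightarrow> complex
    \<Rightarrow> complex \<Rightarrow> complex list \<Rightarrow> (nat list \<Rightarrow> complex) \<Rightarrow> (nat list \<Rightarrow> complex)" where
  "Bapp t a b c d e f u ws v = (\<lambda>out. \<Sum>inp\<in>configs (length ws).
      Bch t a b c d e f u ws out inp 1 0 * v inp)"

text \<open>B(x_1) B(x_2) ... B(x_m) |Omega>, with |Omega> = |0...0>.\<close>
fun Bprod :: "complex \<Rightarrow> complex \<Rightarrow> complex \<Rightarrow> complex \<Rightarrow> complex \<Rightarrow> complex \<Rightarrow> complex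
    \<Rightarrow> complex list \<Rightarrow> complex list \<Rightarrow> (nat list \<Rightarrow> complex)" where
  "Bprod t a b c d e f ws [] = (\<lambda>xs. if xs = replicate (length ws) 0 then 1 else 0)"
| "Bprod t a b c d e f ws (x # xs) = Bapp t a b c d e f x ws (Bprod t a b c d e f ws xs)"

definition ZN :: "complex \<Rightarrow> complex \<Rightarrow> complex \<Rightarrow> complex \<Rightarrow> complex \<Rightarrow> complex \<Rightarrow> complex
    \<Rightarrow> nat \<Rightarrow> (nat \<Rightarrow> complex) \<Rightarrow> (nat \<Rightarrow> complex) \<Rightarrow> complex" where
  "ZN t a b c d e f N u w =
     Bprod t a b c d e f (map w [1..<N+1]) (map u [1..<N+1]) (replicate N 1)"

definition Inv :: "nat \<Rightarrow> (nat \<Rightarrow> nat) \<Rightarrow> (nat \<times> nat) set" where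
  "Inv N \<sigma> = {(j,k). j \<in> {1..N} \<and> k \<in> {1..N} \<and> j < k \<and> \<sigma> j > \<sigma> k}"

end

theory Submission
  imports Defs "HOL-Computational_Algebra.Polynomial"
begin

lemma Lel_vals:
  "Lel t a b c d e f u w 0 0 0 0 = a*u+b*w"
  "Lel t a b c d e f u w 0 0 0 1 = 0"
  "Lel t a b c d e f u w 0 0 0 (Suc 0) = 0"
  "Lel t a b c d e f u w 0 0 1 0 = 0"
  "Lel t a b c d e f u w 0 0 (Suc 0) 0 = 0"
  "Lel t a b c d e f u w 0 0 1 1 = 0"
  "Lel t a b c d e f u w 0 0 (Suc 0) (Suc 0) = 0"
  "Lel t a b c d e f u w 0 1 0 0 = 0"
  "Lel t a b c d e f u w 0 (Suc 0) 0 0 = 0"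
  "Lel t a b c d e f u w 0 1 0 1 = a*t*u+b*w"
  "Lel t a b c d e f u w 0 (Suc 0) 0 (Suc 0) = a*t*u+b*w"
  "Lel t a b c d e f u w 0 1 1 0 = (1-t)*c*u"
  "Lel t a b c d e f u w 0 (Suc 0) (Suc 0) 0 = (1-t)*c*u"
  "Lel t a b c d e f u w 0 1 1 1 = 0"
  "Lel t a b c d e f u w 0 (Suc 0) (Suc 0) (Suc 0) = 0"
  "Lel t a b c d e f u w 1 0 0 0 = 0"
  "Lel t a b c d e f u w (Suc 0) 0 0 0 = 0"
  "Lel t a b c d e f u w 1 0 0 1 = (1-t)*d*w"
  "Lel t a b c d e f u w (Suc 0) 0 0 (Suc 0) = (1-t)*d*w"
  "Lel t a b c d e f u w 1 0 1 0 = e*u+f*w"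
  "Lel t a b c d e f u w (Suc 0) 0 (Suc 0) 0 = e*u+f*w"
  "Lel t a b c d e f u w 1 0 1 1 = 0"
  "Lel t a b c d e f u w (Suc 0) 0 (Suc 0) (Suc 0) = 0"
  "Lel t a b c d e f u w 1 1 0 0 = 0"
  "Lel t a b c d e f u w (Suc 0) (Suc 0) 0 0 = 0"
  "Lel t a b c d e f u w 1 1 0 1 = 0"
  "Lel t a b c d e f u w (Suc 0) (Suc 0) 0 (Suc 0) = 0"
  "Lel t a b c d e f u w 1 1 1 0 = 0"
  "Lel t a b c d e f u w (Suc 0) (Suc 0) (Suc 0) 0 = 0"
  "Lel t a b c d e f u w 1 1 1 1 = e*u+t*f*w"
  "Lel t a b c d e f u w (Suc 0) (Suc 0) (Suc 0) (Suc 0) = e*u+t*f*w"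
  by (simp_all add: Lel_def)

lemma configs_0: "configs 0 = {[]}"
  by (auto simp: configs_def)

lemma configs_Suc: "configs (Suc n) = (\<lambda>(x,xs). x#xs) ` ({0,1} \<times> configs n)"
proof -
  have "xs \<in> (\<lambda>(x,xs). x#xs) ` ({0,1} \<times> configs n)" if "xs \<in> configs (Suc n)" for xs
  proof -
    from that obtain y ys where "xs = y # ys" unfolding configs_def by (cases xs) auto
    with that show ?thesis unfolding configs_def by (auto simp: image_iff)
  qed
  then show ?thesis unfolding configs_def by auto
qed

lemma finite_configs: "finite (configs n)"
  by (induction n) (auto simp: configs_0 configs_Suc)

lemma sum_configs_Suc:
  "(\<Sum>xs\<in>configs (Suc n). F xs) = (\<Sum>x\<in>{0::nat,1}. \<Sum>xs\<in>configs n. F (x#xs))"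
proof -
  have "inj_on (\<lambda>(x,xs). x#xs) ({0::nat,1} \<times> configs n)" by (auto simp: inj_on_def)
  then have "(\<Sum>xs\<in>configs (Suc n). F xs) = (\<Sum>p\<in>{0::nat,1} \<times> configs n. F (fst p # snd p))"
    unfolding configs_Suc by (subst sum.reindex) (auto simp: case_prod_beta intro!: sum.cong)
  also have "\<dots> = (\<Sum>x\<in>{0::nat,1}. \<Sum>xs\<in>configs n. F (x#xs))"
    by (simp add: sum.cartesian_product case_prod_beta)
  finally show ?thesis .
qed

context
  fixes t a b c d e f :: complex
begin

definition Rm :: "complex \<Rightarrow> complex \<Rightarrow> nat \<Rightarrow> nat \<Rightarrow> nat \<Rightarrow> nat \<Rightarrow> complex" where
  "Rm u v g1 g2 a1 a2 =
     (if (g1,g2,a1,a2) = (0,0,0,0) then t*v-u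
      else if (g1,g2,a1,a2) = (1,1,1,1) then t*v-u
      else if (g1,g2,a1,a2) = (0,1,0,1) then t*(v-u)
      else if (g1,g2,a1,a2) = (1,0,1,0) then v-u
      else if (g1,g2,a1,a2) = (0,1,1,0) then (t-1)*u
      else if (g1,g2,a1,a2) = (1,0,0,1) then (t-1)*v
      else 0)"

lemma Rm_vals:
  "Rm u v 0 0 0 0 = t*v-u"
  "Rm u v 0 0 0 1 = 0"
  "Rm u v 0 0 0 (Suc 0) = 0"
  "Rm u v 0 0 1 0 = 0"
  "Rm u v 0 0 (Suc 0) 0 = 0"
  "Rm u v 0 0 1 1 = 0"
  "Rm u v 0 0 (Suc 0) (Suc 0) = 0"
  "Rm u v 0 1 0 0 = 0"
  "Rm u v 0 (Suc 0) 0 0 = 0"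
  "Rm u v 0 1 0 1 = t*(v-u)"
  "Rm u v 0 (Suc 0) 0 (Suc 0) = t*(v-u)"
  "Rm u v 0 1 1 0 = (t-1)*u"
  "Rm u v 0 (Suc 0) (Suc 0) 0 = (t-1)*u"
  "Rm u v 0 1 1 1 = 0"
  "Rm u v 0 (Suc 0) (Suc 0) (Suc 0) = 0"
  "Rm u v 1 0 0 0 = 0"
  "Rm u v (Suc 0) 0 0 0 = 0"
  "Rm u v 1 0 0 1 = (t-1)*v"
  "Rm u v (Suc 0) 0 0 (Suc 0) = (t-1)*v"
  "Rm u v 1 0 1 0 = v-u"
  "Rm u v (Suc 0) 0 (Suc 0) 0 = v-u"
  "Rm u v 1 0 1 1 = 0"
  "Rm u v (Suc 0) 0 (Suc 0) (Suc 0) = 0"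
  "Rm u v 1 1 0 0 = 0"
  "Rm u v (Suc 0) (Suc 0) 0 0 = 0"
  "Rm u v 1 1 0 1 = 0"
  "Rm u v (Suc 0) (Suc 0) 0 (Suc 0) = 0"
  "Rm u v 1 1 1 0 = 0"
  "Rm u v (Suc 0) (Suc 0) (Suc 0) 0 = 0"
  "Rm u v 1 1 1 1 = t*v-u"
  "Rm u v (Suc 0) (Suc 0) (Suc 0) (Suc 0) = t*v-u"
  by (simp_all add: Rm_def)

definition LL :: "complex \<Rightarrow> complex \<Rightarrow> complex \<Rightarrow> nat \<Rightarrow> nat \<Rightarrow> nat \<Rightarrow> nat \<Rightarrow> nat \<Rightarrow> nat \<Rightarrow> complex" where
  "LL u v w a1 x1 a2 x2 dl be = (\<Sum>m\<in>{0::nat,1}. Lel t a b c d e f u w x1 dl a1 m * Lel t a b c d e f v w x2 m a2 be)"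

lemma RLL_all:
  assumes h1: "c*d + a*f = 0" and h2: "t*c*d + b*e = 0" and ha: "a \<noteq> 0" and hb: "b \<noteq> 0"
  shows "\<forall>g1\<in>{0::nat,1}. \<forall>g2\<in>{0::nat,1}. \<forall>a1\<in>{0::nat,1}. \<forall>a2\<in>{0::nat,1}. \<forall>dl\<in>{0::nat,1}. \<forall>be\<in>{0::nat,1}.
       (\<Sum>x1\<in>{0::nat,1}. \<Sum>x2\<in>{0::nat,1}. Rm u v g1 g2 x1 x2 * LL u v w a1 x1 a2 x2 dl be)
       = (\<Sum>x1\<in>{0::nat,1}. \<Sum>x2\<in>{0::nat,1}. LL v u w x2 g2 x1 g1 dl be * Rm u v x1 x2 a1 a2)"
proof -
  have fe: "f = - (c*d)/a" using h1 ha by (simp add: field_simps) (metis add.commute add_eq_0_iff2 mult.commute)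
  have ee: "e = - (t*c*d)/b" using h2 hb by (simp add: field_simps) (metis add.commute add_eq_0_iff2 mult.commute)
  show ?thesis
    apply (simp add: Rm_vals LL_def Lel_vals)
    apply (intro conjI)
    apply (simp_all add: algebra_simps)
    using ha hb
    apply (simp_all add: fe ee field_simps)
    done
qed

lemma LL_zero: "dl \<notin> {0,1} \<or> be \<notin> {0,1} \<Longrightarrow> LL u v w a1 x1 a2 x2 dl be = 0"
  by (auto simp: LL_def Lel_def)

lemma RLL:
  assumes h1: "c*d + a*f = 0" and h2: "t*c*d + b*e = 0" and ha: "a \<noteq> 0" and hb: "b \<noteq> 0"
    and g: "g1 \<in> {0,1}" "g2 \<in> {0,1}" "a1 \<in> {0,1}" "a2 \<in> {0,1}"
  shows "(\<Sum>x1\<in>{0::nat,1}. \<Sum>x2\<in>{0::nat,1}. Rm u v g1 g2 x1 x2 * LL u v w a1 x1 a2 x2 dl be)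
       = (\<Sum>x1\<in>{0::nat,1}. \<Sum>x2\<in>{0::nat,1}. LL v u w x2 g2 x1 g1 dl be * Rm u v x1 x2 a1 a2)"
proof (cases "dl \<in> {0,1} \<and> be \<in> {0,1}")
  case True
  then show ?thesis using RLL_all[OF h1 h2 ha hb] g by blast
next
  case False
  then show ?thesis by (simp add: LL_zero)
qed

definition TT :: "complex \<Rightarrow> complex \<Rightarrow> complex list \<Rightarrow> nat \<Rightarrow> nat \<Rightarrow> nat \<Rightarrow> nat \<Rightarrow> nat list \<Rightarrow> nat list \<Rightarrow> complex" where
  "TT u v ws aA gA aB gB out inp = (\<Sum>mid\<in>configs (length ws).
      Bch t a b c d e f u ws out mid aA gA * Bch t a b c d e f v ws mid inp aB gB)"

lemma TT_Nil: "TT u v [] aA gA aB gB out inp = (if out = [] \<and> inp = [] \<and> aA = gA \<and> aB = gB then 1 else 0)"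
  by (cases out; cases inp) (auto simp: TT_def configs_0)

lemma TT_cons_Nil1: "TT u v (w#ws) aA gA aB gB [] inp = 0"
  by (simp add: TT_def)

lemma TT_cons_Nil2: "TT u v (w#ws) aA gA aB gB out [] = 0"
proof -
  have "Bch t a b c d e f v (w#ws) mid [] aB gB = 0" for mid by (cases mid) auto
  then show ?thesis by (simp add: TT_def)
qed

lemma TT_cons: "TT u v (w#ws) aA gA aB gB (dl#out) (be#inp) =
   (\<Sum>x1\<in>{0::nat,1}. \<Sum>x2\<in>{0::nat,1}. LL u v w aA x1 aB x2 dl be * TT u v ws x1 gA x2 gB out inp)"
proof -
  let ?C = "configs (length ws)"
  have "TT u v (w#ws) aA gA aB gB (dl#out) (be#inp) =
     (\<Sum>m\<in>{0::nat,1}. \<Sum>mid\<in>?C.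
        (\<Sum>x1\<in>{0::nat,1}. Lel t a b c d e f u w x1 dl aA m * Bch t a b c d e f u ws out mid x1 gA) *
        (\<Sum>x2\<in>{0::nat,1}. Lel t a b c d e f v w x2 m aB be * Bch t a b c d e f v ws mid inp x2 gB))"
    by (simp add: TT_def sum_configs_Suc)
  also have "\<dots> = (\<Sum>x1\<in>{0::nat,1}. \<Sum>x2\<in>{0::nat,1}. \<Sum>m\<in>{0::nat,1}. \<Sum>mid\<in>?C.
        (Lel t a b c d e f u w x1 dl aA m * Lel t a b c d e f v w x2 m aB be) *
        (Bch t a b c d e f u ws out mid x1 gA * Bch t a b c d e f v ws mid inp x2 gB))"
    by (simp add: sum.distrib algebra_simps)
  also have "\<dots> = (\<Sum>x1\<in>{0::nat,1}. \<Sum>x2\<in>{0::nat,1}. LL u v w aA x1 aB x2 dl be * TT u v ws x1 gA x2 gB out inp)"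
    by (simp add: LL_def TT_def sum_distrib_left sum_distrib_right sum.distrib algebra_simps)
  finally show ?thesis .
qed

lemma RTT:
  assumes h1: "c*d + a*f = 0" and h2: "t*c*d + b*e = 0" and ha: "a \<noteq> 0" and hb: "b \<noteq> 0"
    and g: "gA \<in> {0,1}" "gB \<in> {0,1}"
  shows "aA \<in> {0,1} \<Longrightarrow> aB \<in> {0,1} \<Longrightarrow>
    (\<Sum>x1\<in>{0::nat,1}. \<Sum>x2\<in>{0::nat,1}. Rm u v gA gB x1 x2 * TT u v ws aA x1 aB x2 out inp)
  = (\<Sum>x1\<in>{0::nat,1}. \<Sum>x2\<in>{0::nat,1}. TT v u ws x2 gB x1 gA out inp * Rm u v x1 x2 aA aB)"
proof (induction ws arbitrary: aA aB out inp)
  case Nil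
  then show ?case using g by (auto simp: TT_Nil)
next
  case (Cons w ws)
  show ?case
  proof (cases out)
    case Nil
    then show ?thesis by (simp add: TT_cons_Nil1)
  next
    case (Cons dl out')
    show ?thesis
    proof (cases inp)
      case Nil
      then show ?thesis by (simp add: TT_cons_Nil2)
    next
      case (Cons be inp')
      let ?B = "{0::nat,1}"
      have "(\<Sum>x1\<in>?B. \<Sum>x2\<in>?B. Rm u v gA gB x1 x2 * TT u v (w#ws) aA x1 aB x2 (dl#out') (be#inp'))
         = (\<Sum>x1\<in>?B. \<Sum>x2\<in>?B. Rm u v gA gB x1 x2 * (\<Sum>y1\<in>?B. \<Sum>y2\<in>?B. LL u v w aA y1 aB y2 dl be * TT u v ws y1 x1 y2 x2 out' inp'))"
        by (simp add: TT_cons)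
      also have "\<dots> = (\<Sum>y1\<in>?B. \<Sum>y2\<in>?B. LL u v w aA y1 aB y2 dl be *
             (\<Sum>x1\<in>?B. \<Sum>x2\<in>?B. Rm u v gA gB x1 x2 * TT u v ws y1 x1 y2 x2 out' inp'))"
        by (simp add: algebra_simps)
      also have "\<dots> = (\<Sum>y1\<in>?B. \<Sum>y2\<in>?B. LL u v w aA y1 aB y2 dl be *
             (\<Sum>x1\<in>?B. \<Sum>x2\<in>?B. TT v u ws x2 gB x1 gA out' inp' * Rm u v x1 x2 y1 y2))"
      proof (rule sum.cong[OF refl], rule sum.cong[OF refl])
        fix y1 y2 assume y: "y1 \<in> ?B" "y2 \<in> ?B"
        show "LL u v w aA y1 aB y2 dl be * (\<Sum>x1\<in>?B. \<Sum>x2\<in>?B. Rm u v gA gB x1 x2 * TT u v ws y1 x1 y2 x2 out' inp') =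
          LL u v w aA y1 aB y2 dl be * (\<Sum>x1\<in>?B. \<Sum>x2\<in>?B. TT v u ws x2 gB x1 gA out' inp' * Rm u v x1 x2 y1 y2)"
          by (simp only: Cons.IH[OF y])
      qed
      also have "\<dots> = (\<Sum>x1\<in>?B. \<Sum>x2\<in>?B. TT v u ws x2 gB x1 gA out' inp' *
             (\<Sum>y1\<in>?B. \<Sum>y2\<in>?B. Rm u v x1 x2 y1 y2 * LL u v w aA y1 aB y2 dl be))"
        by (simp add: algebra_simps)
      also have "\<dots> = (\<Sum>x1\<in>?B. \<Sum>x2\<in>?B. TT v u ws x2 gB x1 gA out' inp' *
             (\<Sum>y1\<in>?B. \<Sum>y2\<in>?B. LL v u w y2 x2 y1 x1 dl be * Rm u v y1 y2 aA aB))"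
      proof (rule sum.cong[OF refl], rule sum.cong[OF refl])
        fix x1 x2 assume x: "x1 \<in> ?B" "x2 \<in> ?B"
        have "(\<Sum>y1\<in>?B. \<Sum>y2\<in>?B. Rm u v x1 x2 y1 y2 * LL u v w aA y1 aB y2 dl be) =
          (\<Sum>y1\<in>?B. \<Sum>y2\<in>?B. LL v u w y2 x2 y1 x1 dl be * Rm u v y1 y2 aA aB)"
          using Cons.prems x by (intro RLL[OF h1 h2 ha hb]) auto
        then show "TT v u ws x2 gB x1 gA out' inp' * (\<Sum>y1\<in>?B. \<Sum>y2\<in>?B. Rm u v x1 x2 y1 y2 * LL u v w aA y1 aB y2 dl be) =
          TT v u ws x2 gB x1 gA out' inp' * (\<Sum>y1\<in>?B. \<Sum>y2\<in>?B. LL v u w y2 x2 y1 x1 dl be * Rm u v y1 y2 aA aB)"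
          by (simp only:)
      qed
      also have "\<dots> = (\<Sum>y1\<in>?B. \<Sum>y2\<in>?B. TT v u (w#ws) y2 gB y1 gA (dl#out') (be#inp') * Rm u v y1 y2 aA aB)"
        by (simp add: TT_cons algebra_simps)
      finally show ?thesis using \<open>out = dl # out'\<close> \<open>inp = be # inp'\<close> by simp
    qed
  qed
qed

lemma TT_B:
  assumes h1: "c*d + a*f = 0" and h2: "t*c*d + b*e = 0" and ha: "a \<noteq> 0" and hb: "b \<noteq> 0"
  shows "(t*v - u) * TT u v ws 1 0 1 0 out inp = (t*v - u) * TT v u ws 1 0 1 0 out inp"
  using RTT[OF h1 h2 ha hb, where gA=0 and gB=0 and aA=1 and aB=1 and u=u and v=v and ws=ws and out=out and inp=inp] by (simp add: Rm_vals)

definition pf :: "(complex \<Rightarrow> complex) \<Rightarrow> bool" where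
  "pf F \<longleftrightarrow> (\<exists>p. \<forall>x. F x = poly p x)"

lemma pf_const: "pf (\<lambda>x. k)"
  unfolding pf_def by (rule exI[of _ "[:k:]"]) simp

lemma pf_id: "pf (\<lambda>x. x)"
  unfolding pf_def by (rule exI[of _ "[:0,1:]"]) simp

lemma pf_add: "pf F \<Longrightarrow> pf G \<Longrightarrow> pf (\<lambda>x. F x + G x)"
  unfolding pf_def by (metis poly_add)

lemma pf_diff: "pf F \<Longrightarrow> pf G \<Longrightarrow> pf (\<lambda>x. F x - G x)"
  unfolding pf_def by (metis poly_diff)

lemma pf_mult: "pf F \<Longrightarrow> pf G \<Longrightarrow> pf (\<lambda>x. F x * G x)"
  unfolding pf_def by (metis poly_mult)

lemma pf_if: "pf F \<Longrightarrow> pf G \<Longrightarrow> pf (\<lambda>x. if P then F x else G x)"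
  by (cases P) auto

lemma pf_sum: "finite A \<Longrightarrow> (\<And>i. i \<in> A \<Longrightarrow> pf (F i)) \<Longrightarrow> pf (\<lambda>x. \<Sum>i\<in>A. F i x)"
proof (induction A rule: finite_induct)
  case empty then show ?case by (simp add: pf_const)
next
  case (insert i A)
  then show ?case by (simp add: pf_add)
qed

lemma pf_zero:
  assumes "pf F" and "infinite {x. F x = 0}"
  shows "F y = 0"
proof -
  from assms(1) obtain p where p: "\<And>x. F x = poly p x" unfolding pf_def by blast
  show ?thesis
  proof (cases "p = 0")
    case True then show ?thesis using p by simp
  next
    case False
    then have "finite {x. poly p x = 0}" by (rule poly_roots_finite)
    with assms(2) p show ?thesis by simp
  qed
qed

lemma pf_Lel: "pf (\<lambda>x. Lel t a b c d e f x w g dl al be)"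
  unfolding Lel_def by (intro pf_if pf_add pf_mult pf_const pf_id)

lemma pf_Bch: "pf (\<lambda>x. Bch t a b c d e f x ws ds bs al g)"
proof (induction ws arbitrary: ds bs al)
  case Nil
  then show ?case by (cases ds; cases bs) (simp_all add: pf_const)
next
  case (Cons w ws)
  then show ?case
    by (cases ds; cases bs) (simp_all add: pf_const pf_add pf_mult pf_Lel)
qed

lemma TT_comm:
  assumes h1: "c*d + a*f = 0" and h2: "t*c*d + b*e = 0" and ha: "a \<noteq> 0" and hb: "b \<noteq> 0"
  shows "TT u v ws 1 0 1 0 out inp = TT v u ws 1 0 1 0 out inp"
proof -
  let ?F = "\<lambda>x. TT x v ws 1 0 1 0 out inp - TT v x ws 1 0 1 0 out inp"
  have "pf ?F" unfolding TT_def
    by (intro pf_diff pf_sum finite_configs pf_mult pf_Bch pf_const)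
  moreover have "infinite {x. ?F x = 0}"
  proof -
    have "UNIV - {t*v} \<subseteq> {x. ?F x = 0}"
    proof
      fix x assume "x \<in> UNIV - {t*v}"
      then have "t*v - x \<noteq> 0" by auto
      with TT_B[OF h1 h2 ha hb, where u=x and v=v and ws=ws and out=out and inp=inp]
      show "x \<in> {x. ?F x = 0}" by simp
    qed
    moreover have "infinite (UNIV - {t*v} :: complex set)"
      by (simp add: infinite_UNIV_char_0)
    ultimately show ?thesis using finite_subset by blast
  qed
  ultimately have "?F u = 0" by (rule pf_zero)
  then show ?thesis by simp
qed

lemma Bapp_TT: "Bapp t a b c d e f u ws (Bapp t a b c d e f v ws g) out =
  (\<Sum>inp\<in>configs (length ws). TT u v ws 1 0 1 0 out inp * g inp)"
  unfolding Bapp_def TT_def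
  by (simp add: sum_distrib_left sum_distrib_right mult.assoc) (rule sum.swap)

lemma Bapp_comm:
  assumes h1: "c*d + a*f = 0" and h2: "t*c*d + b*e = 0" and ha: "a \<noteq> 0" and hb: "b \<noteq> 0"
  shows "Bapp t a b c d e f u ws (Bapp t a b c d e f v ws g) = Bapp t a b c d e f v ws (Bapp t a b c d e f u ws g)"
  by (rule ext) (simp add: Bapp_TT TT_comm[OF h1 h2 ha hb, simplified])

end

definition polyn :: "nat \<Rightarrow> (complex \<Rightarrow> complex) \<Rightarrow> bool" where
  "polyn n F \<longleftrightarrow> (\<exists>p. degree p \<le> n \<and> (\<forall>x. F x = poly p x))"

lemma polyn_const: "polyn n (\<lambda>x. k)"
  unfolding polyn_def by (rule exI[of _ "[:k:]"]) simp

lemma polyn_affine: "(\<And>x. F x = al + be * x) \<Longrightarrow> polyn 1 F"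
  unfolding polyn_def by (rule exI[of _ "[:al, be:]"]) simp

lemma polyn_mono: "polyn n F \<Longrightarrow> n \<le> m \<Longrightarrow> polyn m F"
  unfolding polyn_def by (meson order_trans)

lemma polyn_cong: "polyn n F \<Longrightarrow> (\<And>x. G x = F x) \<Longrightarrow> polyn n G"
  unfolding polyn_def by metis

lemma polyn_add: "polyn n F \<Longrightarrow> polyn n G \<Longrightarrow> polyn n (\<lambda>x. F x + G x)"
  unfolding polyn_def by (metis degree_add_le poly_add)

lemma polyn_mult: "polyn n F \<Longrightarrow> polyn m G \<Longrightarrow> polyn (n + m) (\<lambda>x. F x * G x)"
  unfolding polyn_def by (metis add_mono degree_mult_le order_trans poly_mult)

lemma polyn_if: "polyn n F \<Longrightarrow> polyn n G \<Longrightarrow> polyn n (\<lambda>x. if P then F x else G x)"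
  by (cases P) auto

lemma polyn_sum: "finite A \<Longrightarrow> (\<And>i. i \<in> A \<Longrightarrow> polyn n (F i)) \<Longrightarrow> polyn n (\<lambda>x. \<Sum>i\<in>A. F i x)"
proof (induction A rule: finite_induct)
  case empty then show ?case by (simp add: polyn_const)
next
  case (insert i A)
  then show ?case by (simp add: polyn_add)
qed

lemma polyn_prod: "finite A \<Longrightarrow> (\<And>i. i \<in> A \<Longrightarrow> polyn (m i) (F i)) \<Longrightarrow> polyn (\<Sum>i\<in>A. m i) (\<lambda>x. \<Prod>i\<in>A. F i x)"
proof (induction A rule: finite_induct)
  case empty then show ?case by (simp add: polyn_const)
next
  case (insert i A)
  then show ?case by (simp add: polyn_mult)
qed

lemma polyn_zero:
  assumes "polyn n F" "finite A" "n < card A" "\<And>x. x \<in> A \<Longrightarrow> F x = 0"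
  shows "F y = 0"
proof -
  from assms(1) obtain p where p: "degree p \<le> n" "\<And>x. F x = poly p x" unfolding polyn_def by blast
  show ?thesis
  proof (cases "p = 0")
    case True then show ?thesis using p by simp
  next
    case False
    have "A \<subseteq> {x. poly p x = 0}" using assms(4) p by auto
    moreover have "finite {x. poly p x = 0}" using False by (rule poly_roots_finite)
    ultimately have "card A \<le> card {x. poly p x = 0}" by (rule card_mono[rotated])
    also have "\<dots> \<le> degree p" using False by (rule card_poly_roots_bound)
    finally show ?thesis using p assms(3) by simp
  qed
qed

lemma prod_list_upt: "prod_list (map F [m..<n]) = prod F {m..<n}"
  by (induction n) (auto simp: atLeastLessThanSuc mult.commute)

lemma polyn_diff: "polyn n F \<Longrightarrow> polyn n G \<Longrightarrow> polyn n (\<lambda>x. F x - G x)"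
  unfolding polyn_def by (metis degree_diff_le poly_diff)

context fixes t a b c d e f :: complex begin
definition Tapp :: "complex \<Rightarrow> complex list \<Rightarrow> nat \<Rightarrow> nat \<Rightarrow> (nat list \<Rightarrow> complex) \<Rightarrow> nat list \<Rightarrow> complex" where
  "Tapp u ws al g gv = (\<lambda>out. \<Sum>inp\<in>configs (length ws). Bch t a b c d e f u ws out inp al g * gv inp)"

lemma Bapp_Tapp: "Bapp t a b c d e f u ws gv = Tapp u ws 1 0 gv"
  by (simp add: Bapp_def Tapp_def)

fun MPv :: "complex list \<Rightarrow> (complex \<times> nat \<times> nat) list \<Rightarrow> (nat list \<Rightarrow> complex) \<Rightarrow> nat list \<Rightarrow> complex" where
  "MPv ws [] gv = gv"
| "MPv ws ((u,al,g)#rs) gv = Tapp u ws al g (MPv ws rs gv)"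

definition Om :: "complex list \<Rightarrow> nat list \<Rightarrow> complex" where
  "Om ws = (\<lambda>xs. if xs = replicate (length ws) 0 then 1 else 0)"

definition rowsB :: "complex list \<Rightarrow> (complex \<times> nat \<times> nat) list" where
  "rowsB us = map (\<lambda>u. (u,1,0)) us"

lemma Bprod_MPv: "Bprod t a b c d e f ws us = MPv ws (rowsB us) (Om ws)"
  by (induction us) (simp_all add: Om_def Bapp_Tapp rowsB_def)

fun Col :: "complex \<Rightarrow> (complex \<times> nat \<times> nat) list \<Rightarrow> nat list \<Rightarrow> nat \<Rightarrow> complex" where
  "Col w [] [] dl = (if dl = 0 then 1 else 0)"
| "Col w ((u,al,g)#rs) (x#xs) dl = (\<Sum>be\<in>{0::nat,1}. Lel t a b c d e f u w x dl al be * Col w rs xs be)"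
| "Col w _ _ dl = 0"

definition setin :: "(complex \<times> nat \<times> nat) list \<Rightarrow> nat list \<Rightarrow> (complex \<times> nat \<times> nat) list" where
  "setin rs xs = map (\<lambda>((u,al,g),x). (u,x,g)) (zip rs xs)"

lemma setin_Cons: "setin ((u,al,g)#rs) (x#xs) = (u,x,g) # setin rs xs"
  by (simp add: setin_def)

lemma Tapp_cons: "Tapp u (w#ws) al g gv (dl#out) =
  (\<Sum>x\<in>{0::nat,1}. \<Sum>be\<in>{0::nat,1}. Lel t a b c d e f u w x dl al be * Tapp u ws x g (\<lambda>i. gv (be#i)) out)"
  unfolding Tapp_def
  by (simp add: sum_configs_Suc sum_distrib_left sum_distrib_right sum.distrib algebra_simps)

lemma Tapp_linear: "finite S \<Longrightarrow>
  Tapp u ws al g (\<lambda>i. \<Sum>s\<in>S. k s * h s i) out = (\<Sum>s\<in>S. k s * Tapp u ws al g (h s) out)"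
  unfolding Tapp_def
  by (simp add: sum_distrib_left sum_distrib_right mult.assoc mult.left_commute) (rule sum.swap)

lemma Tapp_scale: "Tapp u ws al g (\<lambda>i. k * h i) out = k * Tapp u ws al g h out"
  unfolding Tapp_def by (simp add: sum_distrib_left algebra_simps)

lemma MPv_scale: "MPv ws rs (\<lambda>i. k * h i) out = k * MPv ws rs h out"
proof (induction rs arbitrary: out)
  case Nil then show ?case by simp
next
  case (Cons r rs)
  obtain u al g where r: "r = (u,al,g)" by (cases r) auto
  have "MPv ws rs (\<lambda>i. k * h i) = (\<lambda>i. k * MPv ws rs h i)" using Cons.IH by (rule ext)
  then show ?case by (simp add: r Tapp_scale)
qed

lemma MPv_append: "MPv ws (rs @ rs2) gv = MPv ws rs (MPv ws rs2 gv)"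
proof (induction rs)
  case Nil then show ?case by simp
next
  case (Cons r rs)
  obtain u al g where r: "r = (u,al,g)" by (cases r) auto
  show ?case using Cons by (simp add: r)
qed

lemma MPv_col: "MPv (w#ws) rs (Om (w#ws)) (dl#out) =
  (\<Sum>xs\<in>configs (length rs). Col w rs xs dl * MPv ws (setin rs xs) (Om ws) out)"
proof (induction rs arbitrary: dl out)
  case Nil
  then show ?case by (simp add: Om_def configs_0 setin_def)
next
  case (Cons r rs)
  obtain u al g where r: "r = (u,al,g)" by (cases r) auto
  let ?C = "configs (length rs)"
  have ih: "(\<lambda>i. MPv (w#ws) rs (Om (w#ws)) (be#i)) =
      (\<lambda>i. \<Sum>xs\<in>?C. Col w rs xs be * MPv ws (setin rs xs) (Om ws) i)" for be
    using Cons.IH by (rule ext)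
  have "MPv (w#ws) (r#rs) (Om (w#ws)) (dl#out) =
     (\<Sum>x\<in>{0::nat,1}. \<Sum>be\<in>{0::nat,1}. Lel t a b c d e f u w x dl al be *
        Tapp u ws x g (\<lambda>i. \<Sum>xs\<in>?C. Col w rs xs be * MPv ws (setin rs xs) (Om ws) i) out)"
    by (simp add: r Tapp_cons ih)
  also have "\<dots> = (\<Sum>x\<in>{0::nat,1}. \<Sum>be\<in>{0::nat,1}. Lel t a b c d e f u w x dl al be *
        (\<Sum>xs\<in>?C. Col w rs xs be * Tapp u ws x g (MPv ws (setin rs xs) (Om ws)) out))"
    by (simp add: Tapp_linear finite_configs)
  also have "\<dots> = (\<Sum>x\<in>{0::nat,1}. \<Sum>xs\<in>?C. (\<Sum>be\<in>{0::nat,1}. Lel t a b c d e f u w x dl al be * Col w rs xs be)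
        * Tapp u ws x g (MPv ws (setin rs xs) (Om ws)) out)"
    by (simp add: sum_distrib_left sum_distrib_right sum.distrib algebra_simps)
  also have "\<dots> = (\<Sum>xs\<in>configs (length (r#rs)). Col w (r#rs) xs dl * MPv ws (setin (r#rs) xs) (Om ws) out)"
    by (simp add: r sum_configs_Suc setin_Cons)
  finally show ?case .
qed


lemma Lel_w_lin: "polyn 1 (\<lambda>x. Lel t a b c d e f u x g dl al be)"
proof (rule polyn_affine)
  fix x
  show "Lel t a b c d e f u x g dl al be = Lel t a b c d e f u 0 g dl al be +
     (Lel t a b c d e f u 1 g dl al be - Lel t a b c d e f u 0 g dl al be) * x"
    unfolding Lel_def by (simp add: algebra_simps)
qed

lemma Col_deg: "dl \<in> {0,1} \<Longrightarrow> polyn (length us - dl) (\<lambda>x. Col x (rowsB us) xs dl)"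
proof (induction us arbitrary: xs dl)
  case Nil
  show ?case by (cases xs) (auto simp: rowsB_def polyn_const)
next
  case (Cons u us)
  show ?case
  proof (cases xs)
    case Nil then show ?thesis by (simp add: rowsB_def polyn_const)
  next
    case (Cons y ys)
    have e0: "Col x (rowsB (u#us)) (y#ys) dl = Lel t a b c d e f u x y dl 1 0 * Col x (rowsB us) ys 0
        + Lel t a b c d e f u x y dl 1 1 * Col x (rowsB us) ys 1" for x
      by (simp add: rowsB_def)
    have IH0: "polyn (length us) (\<lambda>x. Col x (rowsB us) ys 0)" using Cons.IH[of 0 ys] by simp
    have IH1: "polyn (length us - 1) (\<lambda>x. Col x (rowsB us) ys 1)" using Cons.IH[of 1 ys] by simp
    from Cons.prems consider "dl = 0" | "dl = 1" by auto
    then show ?thesis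
    proof cases
      case 1
      have z: "Lel t a b c d e f u x y dl (Suc 0) (Suc 0) = 0" for x using 1 by (simp add: Lel_def)
      have "polyn (1 + length us) (\<lambda>x. Lel t a b c d e f u x y dl 1 0 * Col x (rowsB us) ys 0)"
        by (intro polyn_mult Lel_w_lin IH0)
      then have "polyn (1 + length us) (\<lambda>x. Lel t a b c d e f u x y dl 1 0 * Col x (rowsB us) ys 0
          + Lel t a b c d e f u x y dl 1 1 * Col x (rowsB us) ys 1)"
        by (simp add: z)
      then have P: "polyn (length (u # us) - dl) (\<lambda>x. Lel t a b c d e f u x y dl 1 0 * Col x (rowsB us) ys 0
          + Lel t a b c d e f u x y dl 1 1 * Col x (rowsB us) ys 1)" using 1 by simp
      show ?thesis unfolding \<open>xs = y # ys\<close> by (rule polyn_cong[OF P]) (rule e0)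
    next
      case 2
      have k: "Lel t a b c d e f u x y dl 1 0 = Lel t a b c d e f u 0 y dl 1 0" for x
        using 2 by (simp add: Lel_def)
      have A: "polyn (length us) (\<lambda>x. Lel t a b c d e f u x y dl 1 0 * Col x (rowsB us) ys 0)"
        by (rule polyn_cong[OF polyn_mult[OF polyn_const[of 0 "Lel t a b c d e f u 0 y dl 1 0"] IH0, unfolded add_0]])
           (rule arg_cong2[where f="(*)"], rule k, rule refl)
      have B: "polyn (length us) (\<lambda>x. Lel t a b c d e f u x y dl 1 1 * Col x (rowsB us) ys 1)"
      proof (cases "us = []")
        case True
        have "Col x (rowsB us) ys 1 = 0" for x using True by (cases ys) (simp_all add: rowsB_def)
        then show ?thesis by (simp add: polyn_const)
      next
        case False
        have "polyn (1 + (length us - 1)) (\<lambda>x. Lel t a b c d e f u x y dl 1 1 * Col x (rowsB us) ys 1)"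
          by (intro polyn_mult Lel_w_lin IH1)
        then show ?thesis using False by simp
      qed
      have "polyn (length us) (\<lambda>x. Lel t a b c d e f u x y dl 1 0 * Col x (rowsB us) ys 0
          + Lel t a b c d e f u x y dl 1 1 * Col x (rowsB us) ys 1)"
        by (rule polyn_add[OF A B])
      then have P: "polyn (length (u # us) - dl) (\<lambda>x. Lel t a b c d e f u x y dl 1 0 * Col x (rowsB us) ys 0
          + Lel t a b c d e f u x y dl 1 1 * Col x (rowsB us) ys 1)" using 2 by simp
      show ?thesis unfolding \<open>xs = y # ys\<close> by (rule polyn_cong[OF P]) (rule e0)
    qed
  qed
qed

lemma Col_frozen:
  assumes z: "e*z + f*w = 0" and dl: "dl \<in> {0,1}"
  shows "Col w (rowsB (us @ [z])) xs dl =
    (if dl = 1 \<and> xs = replicate (length us) 1 @ [0] then prod_list (map (\<lambda>v. e*v + t*f*w) us) * ((1-t)*c*z) else 0)"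
  using dl
proof (induction us arbitrary: xs dl)
  case Nil
  show ?case
  proof (cases xs)
    case Nil then show ?thesis by (simp add: rowsB_def)
  next
    case (Cons y ys)
    then show ?thesis using Nil.prems z
      by (cases ys) (auto simp: rowsB_def Lel_def)
  qed
next
  case (Cons u us)
  show ?case
  proof (cases xs)
    case Nil then show ?thesis by (simp add: rowsB_def)
  next
    case (Cons y ys)
    have "Col w (rowsB ((u#us) @ [z])) (y#ys) dl = Lel t a b c d e f u w y dl 1 0 * Col w (rowsB (us@[z])) ys 0
        + Lel t a b c d e f u w y dl 1 1 * Col w (rowsB (us@[z])) ys 1"
      by (simp add: rowsB_def)
    also have "\<dots> = Lel t a b c d e f u w y dl 1 1 * Col w (rowsB (us@[z])) ys 1"
      using Cons.IH[of 0 ys] by simp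
    also have "\<dots> = (if dl = 1 \<and> xs = replicate (length (u#us)) 1 @ [0] then prod_list (map (\<lambda>v. e*v + t*f*w) (u#us)) * ((1-t)*c*z) else 0)"
      using Cons.IH[of 1 ys] Cons.prems \<open>xs = y#ys\<close> by (auto simp: Lel_def)
    finally show ?thesis using \<open>xs = y#ys\<close> by simp
  qed
qed

lemma setin_frozen: "setin (rowsB (us @ [z])) (replicate (length us) 1 @ [0]) = rowsB us @ [(z,0,0)]"
  by (induction us) (simp_all add: rowsB_def setin_def)

lemma Bch_A: "Bch t a b c d e f z ws out (replicate (length ws) 0) 0 0 =
   (if out = replicate (length ws) 0 then prod_list (map (\<lambda>w. a*z + b*w) ws) else 0)"
proof (induction ws arbitrary: out)
  case Nil then show ?case by (cases out) simp_all
next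
  case (Cons w ws)
  show ?case
  proof (cases out)
    case Nil then show ?thesis by simp
  next
    case (Cons y ys)
    then show ?thesis using Cons.IH[of ys] by (auto simp: Lel_def)
  qed
qed

lemma Tapp_A: "Tapp z ws 0 0 (Om ws) = (\<lambda>out. prod_list (map (\<lambda>w. a*z + b*w) ws) * Om ws out)"
proof (rule ext)
  fix out
  have r: "replicate (length ws) 0 \<in> configs (length ws)" by (auto simp: configs_def)
  have "Tapp z ws 0 0 (Om ws) out = Bch t a b c d e f z ws out (replicate (length ws) 0) 0 0"
    unfolding Tapp_def Om_def using r finite_configs
    by (simp add: if_distrib[where f="\<lambda>x. _ * x"] sum.delta' cong: if_cong)
  then show "Tapp z ws 0 0 (Om ws) out = prod_list (map (\<lambda>w. a*z + b*w) ws) * Om ws out"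
    by (simp add: Bch_A Om_def)
qed


lemma Bprod_col: "Bprod t a b c d e f (w1 # ws) us (1 # r) =
  (\<Sum>xs\<in>configs (length us). Col w1 (rowsB us) xs 1 * MPv ws (setin (rowsB us) xs) (Om ws) r)"
proof -
  have "length (rowsB us) = length us" by (simp add: rowsB_def)
  then show ?thesis by (simp only: Bprod_MPv MPv_col)
qed

lemma ZN_col: "ZN t a b c d e f (Suc n) u w =
  (\<Sum>xs\<in>configs (Suc n). Col (w 1) (rowsB (map u [1..<n+2])) xs 1 *
      MPv (map w [2..<n+2]) (setin (rowsB (map u [1..<n+2])) xs) (Om (map w [2..<n+2])) (replicate n 1))"
proof -
  have ws: "map w [1..<n+2] = w 1 # map w [2..<n+2]"
    using upt_conv_Cons[of 1 "n+2"] by (simp add: numeral_2_eq_2)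
  have e: "Suc n + 1 = n + 2" by simp
  have l: "length (map u [1..<n+2]) = Suc n" by simp
  show ?thesis
    unfolding ZN_def e replicate_Suc ws Bprod_col l ..
qed

lemma col_poly: "length U = Suc n \<Longrightarrow> polyn n (\<lambda>x. \<Sum>xs\<in>configs (Suc n). Col x (rowsB U) xs 1 * MPv W (setin (rowsB U) xs) (Om W) r)"
proof (intro polyn_sum finite_configs)
  fix xs assume l: "length U = Suc n"
  have "polyn (length U - 1 + 0) (\<lambda>x. Col x (rowsB U) xs 1 * MPv W (setin (rowsB U) xs) (Om W) r)"
    by (intro polyn_mult Col_deg polyn_const) simp
  then show "polyn n (\<lambda>x. Col x (rowsB U) xs 1 * MPv W (setin (rowsB U) xs) (Om W) r)"
    using l by simp
qed

lemma ZN_poly: "polyn n (\<lambda>x. ZN t a b c d e f (Suc n) u (w(1:=x)))"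
proof -
  have ws: "map (w(1:=x)) [2..<n+2] = map w [2..<n+2]" for x by (intro map_cong) auto
  have l: "length (map u [1..<n+2]) = Suc n" by simp
  show ?thesis by (rule polyn_cong[OF col_poly[OF l]]) (simp only: ZN_col ws fun_upd_same)
qed

lemma Bprod_frozen:
  assumes z: "e * z + f * xz = 0"
  shows "Bprod t a b c d e f (xz # ws) (us @ [z]) (1 # replicate (length us) 1) =
    prod_list (map (\<lambda>v. e*v + t*f*xz) us) * ((1-t)*c*z) * prod_list (map (\<lambda>w. a*z + b*w) ws)
      * Bprod t a b c d e f ws us (replicate (length us) 1)"
proof -
  let ?xz = "replicate (length us) 1 @ [0::nat]"
  let ?M = "\<lambda>xs. MPv ws (setin (rowsB (us @ [z])) xs) (Om ws) (replicate (length us) 1)"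
  let ?K = "prod_list (map (\<lambda>v. e*v + t*f*xz) us) * ((1-t)*c*z)"
  have xzc: "?xz \<in> configs (Suc (length us))" by (auto simp: configs_def)
  have "Bprod t a b c d e f (xz # ws) (us @ [z]) (1 # replicate (length us) 1) =
      (\<Sum>xs\<in>configs (Suc (length us)). Col xz (rowsB (us @ [z])) xs 1 * ?M xs)"
    unfolding Bprod_col length_append_singleton ..
  also have "\<dots> = (\<Sum>xs\<in>configs (Suc (length us)). (if xs = ?xz then ?K * ?M ?xz else 0))"
    by (rule sum.cong[OF refl]) (simp add: Col_frozen[OF z])
  also have "\<dots> = ?K * ?M ?xz" using xzc finite_configs by (simp add: sum.delta')
  also have "?M ?xz = prod_list (map (\<lambda>w. a*z + b*w) ws) * Bprod t a b c d e f ws us (replicate (length us) 1)"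
    by (unfold setin_frozen MPv_append) (simp add: Tapp_A MPv_scale Bprod_MPv)
  finally show ?thesis by (simp only: mult.assoc)
qed

lemma Z_frozen:
  assumes z: "e * u (Suc n) + f * xz = 0"
  shows "ZN t a b c d e f (Suc n) u (w(1:=xz)) =
    (\<Prod>j=1..n. e*u j + t*f*xz) * ((1-t)*c*u (Suc n)) * (\<Prod>k=1..n. a*u (Suc n) + b*w (Suc k))
      * ZN t a b c d e f n u (\<lambda>k. w (Suc k))"
proof -
  have ws0: "map (w(1:=xz)) [1..<n+2] = xz # map w [2..<n+2]"
  proof -
    have "[1..<n+2] = 1 # [2..<n+2]" using upt_conv_Cons[of 1 "n+2"] by (simp add: numeral_2_eq_2)
    moreover have "map (w(1:=xz)) [2..<n+2] = map w [2..<n+2]" by (intro map_cong) auto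
    ultimately show ?thesis by simp
  qed
  have us: "map u [1..<n+2] = map u [1..<n+1] @ [u (Suc n)]" by simp
  have e: "Suc n + 1 = n + 2" by simp
  have l: "length (map u [1..<n+1]) = n" by simp
  have ws1: "map (\<lambda>k. w (Suc k)) [1..<n+1] = map w [2..<n+2]"
  proof -
    have "map Suc [1..<n+1] = [2..<n+2]" using map_Suc_upt[of 1 "n+1"] by (simp add: numeral_2_eq_2)
    moreover have "map (\<lambda>k. w (Suc k)) [1..<n+1] = map w (map Suc [1..<n+1])" by (simp only: map_map o_def)
    ultimately show ?thesis by simp
  qed
  have p1: "prod_list (map (\<lambda>v. e*v + t*f*xz) (map u [1..<n+1])) = (\<Prod>j=1..n. e*u j + t*f*xz)"
    unfolding map_map o_def prod_list_upt by (simp add: atLeastLessThanSuc_atLeastAtMost)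
  have p2: "prod_list (map (\<lambda>w. a*u (Suc n) + b*w) (map w [2..<n+2])) = (\<Prod>k=1..n. a*u (Suc n) + b*w (Suc k))"
    unfolding ws1[symmetric] map_map o_def prod_list_upt by (simp add: atLeastLessThanSuc_atLeastAtMost)
  have "ZN t a b c d e f (Suc n) u (w(1:=xz)) =
      Bprod t a b c d e f (xz # map w [2..<n+2]) (map u [1..<n+1] @ [u (Suc n)]) (1 # replicate (length (map u [1..<n+1])) 1)"
    unfolding l
    unfolding ZN_def e ws0 us replicate_Suc l ..
  also have "\<dots> = (\<Prod>j=1..n. e*u j + t*f*xz) * ((1-t)*c*u (Suc n)) * (\<Prod>k=1..n. a*u (Suc n) + b*w (Suc k))
      * Bprod t a b c d e f (map w [2..<n+2]) (map u [1..<n+1]) (replicate n 1)"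
    unfolding Bprod_frozen[OF z] p1 p2 by (simp only: l)
  also have "Bprod t a b c d e f (map w [2..<n+2]) (map u [1..<n+1]) (replicate n 1) = ZN t a b c d e f n u (\<lambda>k. w (Suc k))"
    unfolding ZN_def ws1 ..
  finally show ?thesis .
qed


lemma Bprod_swap: assumes h1: "c*d + a*f = 0" and h2: "t*c*d + b*e = 0" and ha: "a \<noteq> 0" and hb: "b \<noteq> 0"
  shows "Bprod t a b c d e f ws (xs @ y # ys) = Bprod t a b c d e f ws (y # xs @ ys)"
proof (induction xs)
  case Nil then show ?case by simp
next
  case (Cons x xs)
  then show ?case by (simp add: Bapp_comm[OF h1 h2 ha hb])
qed

lemma Bprod_mset: assumes h1: "c*d + a*f = 0" and h2: "t*c*d + b*e = 0" and ha: "a \<noteq> 0" and hb: "b \<noteq> 0"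
  shows "mset us = mset vs \<Longrightarrow> Bprod t a b c d e f ws us = Bprod t a b c d e f ws vs"
proof (induction us arbitrary: vs)
  case Nil then show ?case by simp
next
  case (Cons x us)
  then have "x \<in> set vs" by (metis list.set_intros(1) set_mset_mset)
  then obtain xs ys where vs: "vs = xs @ x # ys" by (meson split_list)
  with Cons.prems have "mset us = mset (xs @ ys)" by simp
  then have "Bprod t a b c d e f ws us = Bprod t a b c d e f ws (xs @ ys)" by (rule Cons.IH)
  then show ?case unfolding vs Bprod_swap[OF h1 h2 ha hb] by simp
qed

lemma ZN_perm: assumes h1: "c*d + a*f = 0" and h2: "t*c*d + b*e = 0" and ha: "a \<noteq> 0" and hb: "b \<noteq> 0"
    and p: "p permutes {1..N}"
  shows "ZN t a b c d e f N (u \<circ> p) w = ZN t a b c d e f N u w"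
proof -
  have "mset (map p [1..<N+1]) = mset [1..<N+1]"
  proof -
    have d1: "distinct (map p [1..<N+1])"
      unfolding distinct_map using distinct_upt inj_on_subset[OF permutes_inj[OF p] subset_UNIV] by blast
    have d2: "distinct [1..<N+1]" by (rule distinct_upt)
    have s: "set [1..<N+1] = {1..N}" by auto
    have "set (map p [1..<N+1]) = set [1..<N+1]" by (simp only: set_map s permutes_image[OF p])
    then show ?thesis using set_eq_iff_mset_eq_distinct[OF d1 d2] by blast
  qed
  then have "mset (map (u \<circ> p) [1..<N+1]) = mset (map u [1..<N+1])"
    by (simp only: map_map[symmetric] mset_map)
  then show ?thesis unfolding ZN_def by (subst Bprod_mset[OF h1 h2 ha hb], assumption) (rule refl)
qed

lemma prod_Suc_shift: "(\<Prod>j\<in>{1..Suc n}. F j) = F 1 * (\<Prod>j\<in>{1..n}. F (Suc j))"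
proof -
  have "{1..Suc n} = insert 1 (Suc ` {1..n})"
    by (auto simp: image_iff)
  moreover have "(\<Prod>j\<in>insert 1 (Suc ` {1..n}). F j) = F 1 * (\<Prod>j\<in>Suc ` {1..n}. F j)"
    by (rule prod.insert) auto
  moreover have "(\<Prod>j\<in>Suc ` {1..n}. F j) = (\<Prod>j\<in>{1..n}. F (Suc j))"
    by (rule prod.reindex_cong[where l=Suc]) auto
  ultimately show ?thesis by simp
qed

lemma prod_gt_shift: "(\<Prod>k\<in>{Suc j<..Suc n}. F k) = (\<Prod>k\<in>{j<..n}. F (Suc k))"
proof -
  have "{Suc j<..Suc n} = Suc ` {j<..n}"
    by (auto simp: image_iff) (metis Suc_le_mono Suc_less_eq2 greaterThanAtMost_iff less_imp_Suc_add)
  then show ?thesis by (simp add: prod.reindex)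
qed

lemma prod_gt1_shift: "(\<Prod>k\<in>{1<..Suc n}. F k) = (\<Prod>k\<in>{1..n}. F (Suc k))"
proof -
  have "{0::nat<..n} = {1..n}" by auto
  then show ?thesis using prod_gt_shift[where j=0 and n=n and F=F] by simp
qed

lemma prod_lt_shift: "1 \<le> j \<Longrightarrow> (\<Prod>k\<in>{1..<Suc j}. F k) = F 1 * (\<Prod>k\<in>{1..<j}. F (Suc k))"
proof -
  assume j: "1 \<le> j"
  have "{1..<Suc j} = insert 1 (Suc ` {1..<j})"
    using j by (auto simp: image_iff)
  moreover have "(\<Prod>j\<in>insert 1 (Suc ` {1..<j}). F j) = F 1 * (\<Prod>j\<in>Suc ` {1..<j}. F j)"
    by (rule prod.insert) auto
  moreover have "(\<Prod>j\<in>Suc ` {1..<j}. F j) = (\<Prod>k\<in>{1..<j}. F (Suc k))"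
    by (rule prod.reindex_cong[where l=Suc]) auto
  ultimately show ?thesis by simp
qed


definition G :: "nat \<Rightarrow> (nat \<Rightarrow> complex) \<Rightarrow> (nat \<Rightarrow> complex) \<Rightarrow> complex" where
  "G N v w = (\<Prod>j=1..N. \<Prod>k\<in>{j<..N}. (t*v j - v k)/(v j - v k)) *
     (\<Prod>j=1..N. \<Prod>k\<in>{j<..N}. a*v j + b*w k) * (\<Prod>j=1..N. \<Prod>k\<in>{1..<j}. e*v j + f*w k)"

definition S :: "nat \<Rightarrow> (nat \<Rightarrow> complex) \<Rightarrow> (nat \<Rightarrow> complex) \<Rightarrow> complex" where
  "S N u w = (\<Prod>j=1..N. (1-t)*c*u j) * (\<Sum>\<sigma>\<in>{\<sigma>. \<sigma> permutes {1..N}}. G N (u \<circ> \<sigma>) w)"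

lemma G_cong: "(\<And>j. j \<in> {1..N} \<Longrightarrow> v j = v' j) \<Longrightarrow> (\<And>k. k \<in> {1..N} \<Longrightarrow> w k = w' k) \<Longrightarrow> G N v w = G N v' w'"
  unfolding G_def by (intro arg_cong2[where f="(*)"] prod.cong refl) auto

lemma S_perm: "p permutes {1..N} \<Longrightarrow> S N (u \<circ> p) w = S N u w"
proof -
  assume p: "p permutes {1..N}"
  have "(\<Prod>j=1..N. (1-t)*c*(u \<circ> p) j) = (\<Prod>j=1..N. (1-t)*c*u j)"
    using prod.permute[OF p, of "\<lambda>j. (1-t)*c*u j"] by (simp add: o_def)
  moreover have "(\<Sum>\<sigma>\<in>{\<sigma>. \<sigma> permutes {1..N}}. G N ((u \<circ> p) \<circ> \<sigma>) w) = (\<Sum>\<sigma>\<in>{\<sigma>. \<sigma> permutes {1..N}}. G N (u \<circ> \<sigma>) w)"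
    using setum_permutations_compose_left[OF p, of "\<lambda>\<sigma>. G N (u \<circ> \<sigma>) w"] by (simp add: o_assoc)
  ultimately show ?thesis unfolding S_def by simp
qed

lemma S_0: "S 0 u w = 1"
  by (simp add: S_def G_def)

lemma sum_ind1: "(\<Sum>j=1..N. \<Sum>k\<in>{1..<j}. (if k = 1 then 1 else 0::nat)) = N - 1"
proof (induction N)
  case 0 then show ?case by simp
next
  case (Suc N)
  have "(\<Sum>k\<in>{1..<Suc N}. (if k = 1 then 1 else 0::nat)) = (if 1 < Suc N then 1 else 0)"
    by (simp add: sum.delta)
  then show ?case using Suc by (cases N) simp_all
qed

lemma G_poly: "polyn n (\<lambda>x. G (Suc n) v (w(1:=x)))"
proof -
  let ?A = "(\<Prod>j=1..Suc n. \<Prod>k\<in>{j<..Suc n}. (t*v j - v k)/(v j - v k))"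
  let ?B = "(\<Prod>j=1..Suc n. \<Prod>k\<in>{j<..Suc n}. a*v j + b*w k)"
  have B: "(\<Prod>j=1..Suc n. \<Prod>k\<in>{j<..Suc n}. a*v j + b*(w(1:=x)) k) = ?B" for x
    by (intro prod.cong refl) auto
  have C: "polyn (\<Sum>j=1..Suc n. \<Sum>k\<in>{1..<j}. (if k = 1 then 1 else 0))
      (\<lambda>x. \<Prod>j=1..Suc n. \<Prod>k\<in>{1..<j}. e*v j + f*(w(1:=x)) k)"
  proof (intro polyn_prod finite_atLeastAtMost finite_atLeastLessThan)
    fix j k :: nat
    show "polyn (if k = 1 then 1 else 0) (\<lambda>x. e*v j + f*(w(1:=x)) k)"
    proof (cases "k = 1")
      case True then show ?thesis using polyn_affine[of "\<lambda>x. e*v j + f*x" "e*v j" f] by simp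
    next
      case False then show ?thesis by (simp add: polyn_const)
    qed
  qed
  have "polyn (0 + 0 + n) (\<lambda>x. ?A * ?B * (\<Prod>j=1..Suc n. \<Prod>k\<in>{1..<j}. e*v j + f*(w(1:=x)) k))"
    by (intro polyn_mult polyn_const) (use C sum_ind1[of "Suc n"] in simp)
  then have "polyn n (\<lambda>x. ?A * ?B * (\<Prod>j=1..Suc n. \<Prod>k\<in>{1..<j}. e*v j + f*(w(1:=x)) k))" by simp
  then show ?thesis by (rule polyn_cong) (simp add: G_def B)
qed

lemma S_poly: "polyn n (\<lambda>x. S (Suc n) u (w(1:=x)))"
proof -
  have "polyn (0 + n) (\<lambda>x. (\<Prod>j=1..Suc n. (1-t)*c*u j) * (\<Sum>\<sigma>\<in>{\<sigma>. \<sigma> permutes {1..Suc n}}. G (Suc n) (u \<circ> \<sigma>) (w(1:=x))))"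
    by (intro polyn_mult polyn_const polyn_sum G_poly) (simp add: finite_permutations)
  then show ?thesis by (simp add: S_def)
qed

lemma G_split: "G (Suc n) v W =
   (\<Prod>k=1..n. (t*v 1 - v (Suc k))/(v 1 - v (Suc k))) * (\<Prod>k=1..n. a*v 1 + b*W (Suc k)) *
   (\<Prod>j=1..n. e*v (Suc j) + f*W 1) * G n (\<lambda>j. v (Suc j)) (\<lambda>k. W (Suc k))"
proof -
  have P1: "(\<Prod>j=1..Suc n. \<Prod>k\<in>{j<..Suc n}. (t*v j - v k)/(v j - v k)) =
     (\<Prod>k=1..n. (t*v 1 - v (Suc k))/(v 1 - v (Suc k))) *
     (\<Prod>j=1..n. \<Prod>k\<in>{j<..n}. (t*v (Suc j) - v (Suc k))/(v (Suc j) - v (Suc k)))"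
    by (simp only: prod_Suc_shift prod_gt_shift prod_gt1_shift)
  have P2: "(\<Prod>j=1..Suc n. \<Prod>k\<in>{j<..Suc n}. a*v j + b*W k) =
     (\<Prod>k=1..n. a*v 1 + b*W (Suc k)) * (\<Prod>j=1..n. \<Prod>k\<in>{j<..n}. a*v (Suc j) + b*W (Suc k))"
    by (simp only: prod_Suc_shift prod_gt_shift prod_gt1_shift)
  have P3: "(\<Prod>j=1..Suc n. \<Prod>k\<in>{1..<j}. e*v j + f*W k) =
     (\<Prod>j=1..n. e*v (Suc j) + f*W 1) * (\<Prod>j=1..n. \<Prod>k\<in>{1..<j}. e*v (Suc j) + f*W (Suc k))"
  proof -
    have e1: "{1::nat..<1} = {}" by simp
    have "(\<Prod>j=1..Suc n. \<Prod>k\<in>{1..<j}. e*v j + f*W k) = (\<Prod>j=1..n. \<Prod>k\<in>{1..<Suc j}. e*v (Suc j) + f*W k)"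
      by (simp only: prod_Suc_shift e1 prod.empty mult_1)
    also have "\<dots> = (\<Prod>j=1..n. (e*v (Suc j) + f*W 1) * (\<Prod>k\<in>{1..<j}. e*v (Suc j) + f*W (Suc k)))"
      by (intro prod.cong refl prod_lt_shift) auto
    finally show ?thesis by (simp add: prod.distrib)
  qed
  show ?thesis unfolding G_def P1 P2 P3 by (simp add: algebra_simps)
qed


lemma S_frozen:
  assumes z: "e * u (Suc n) + f * xz = 0" and inj: "inj_on u {1..Suc n}"
  shows "S (Suc n) u (w(1:=xz)) = (\<Prod>j=1..n. e*u j + t*f*xz) * ((1-t)*c*u (Suc n)) *
     (\<Prod>k=1..n. a*u (Suc n) + b*w (Suc k)) * S n u (\<lambda>k. w (Suc k))"
proof -
  define N where "N = Suc n"
  define W where "W = w(1:=xz)"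
  define rho :: "nat \<Rightarrow> nat" where "rho = (\<lambda>j. if j = 1 then N else if j \<in> {2..N} then j - 1 else j)"
  have rho_perm: "rho permutes {1..N}"
  proof (rule bij_imp_permutes)
    show "bij_betw rho {1..N} {1..N}"
      by (rule bij_betw_byWitness[where f'="\<lambda>j. if j = N then 1 else if j \<in> {1..n} then j + 1 else j"])
         (auto simp: rho_def N_def)
    show "rho x = x" if "x \<notin> {1..N}" for x using that by (auto simp: rho_def N_def)
  qed
  have rho1: "rho 1 = N" by (simp add: rho_def)
  have rhoS: "rho (Suc j) = j" if "j \<in> {1..n}" for j using that by (auto simp: rho_def N_def)
  let ?P = "{\<sigma>. \<sigma> permutes {1..N}}"
  let ?P1 = "{\<sigma>. \<sigma> permutes {1..N} \<and> \<sigma> 1 = N}"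
  let ?Q = "{\<sigma>'. \<sigma>' permutes {1..n}}"
  have zero: "G N (u \<circ> \<sigma>) W = 0" if "\<sigma> \<in> ?P - ?P1" for \<sigma>
  proof -
    from that have sp: "\<sigma> permutes {1..N}" and s1: "\<sigma> 1 \<noteq> N" by auto
    have "N \<in> \<sigma> ` {1..N}" using permutes_image[OF sp] by (simp add: N_def)
    then obtain j0 where j0: "j0 \<in> {1..N}" "\<sigma> j0 = N" by auto
    with s1 have "j0 \<noteq> 1" by auto
    with j0 have k1: "1 \<in> {1..<j0}" by auto
    have "e * (u \<circ> \<sigma>) j0 + f * W 1 = 0" using z j0 by (simp add: W_def N_def)
    then have "(\<Prod>k\<in>{1..<j0}. e * (u \<circ> \<sigma>) j0 + f * W k) = 0"
      using k1 by (metis (no_types, lifting) finite_atLeastLessThan prod_zero_iff)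
    then have "(\<Prod>j=1..N. \<Prod>k\<in>{1..<j}. e * (u \<circ> \<sigma>) j + f * W k) = 0"
      using j0(1) by (metis (no_types, lifting) finite_atLeastAtMost prod_zero_iff)
    then show ?thesis by (simp add: G_def)
  qed
  have sum1: "(\<Sum>\<sigma>\<in>?P. G N (u \<circ> \<sigma>) W) = (\<Sum>\<sigma>\<in>?P1. G N (u \<circ> \<sigma>) W)"
    by (rule sum.mono_neutral_right) (auto simp: finite_permutations zero)
  have img: "?P1 = (\<lambda>\<sigma>'. \<sigma>' \<circ> rho) ` ?Q"
  proof
    show "(\<lambda>\<sigma>'. \<sigma>' \<circ> rho) ` ?Q \<subseteq> ?P1"
    proof clarify
      fix \<sigma>' assume q: "\<sigma>' permutes {1..n}"
      have q': "\<sigma>' permutes {1..N}" by (rule permutes_subset[OF q]) (auto simp: N_def)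
      have "\<sigma>' N = N" using permutes_not_in[OF q] by (simp add: N_def)
      then show "\<sigma>' \<circ> rho permutes {1..N} \<and> (\<sigma>' \<circ> rho) 1 = N"
        using permutes_compose[OF rho_perm q'] rho1 by simp
    qed
    show "?P1 \<subseteq> (\<lambda>\<sigma>'. \<sigma>' \<circ> rho) ` ?Q"
    proof
      fix \<sigma> assume "\<sigma> \<in> ?P1"
      then have sp: "\<sigma> permutes {1..N}" and s1: "\<sigma> 1 = N" by auto
      let ?s = "\<sigma> \<circ> inv rho"
      have s': "?s permutes {1..N}" using permutes_compose[OF permutes_inv[OF rho_perm] sp] .
      have "inv rho N = 1" using permutes_inv_eq[OF rho_perm] rho1 by blast
      then have sN: "?s N = N" using s1 by simp
      have "?s permutes {1..n}"
        by (rule permutes_superset[OF s']) (use sN in \<open>auto simp: N_def le_Suc_eq\<close>)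
      moreover have "\<sigma> = ?s \<circ> rho" using permutes_inv_o(2)[OF rho_perm] by (simp add: comp_assoc)
      ultimately show "\<sigma> \<in> (\<lambda>\<sigma>'. \<sigma>' \<circ> rho) ` ?Q" by blast
    qed
  qed
  have injr: "inj_on (\<lambda>\<sigma>'. \<sigma>' \<circ> rho) ?Q"
  proof (rule inj_onI)
    fix p q assume "p \<circ> rho = q \<circ> rho"
    then have "p \<circ> rho \<circ> inv rho = q \<circ> rho \<circ> inv rho" by simp
    then show "p = q" using permutes_inv_o(1)[OF rho_perm] by (simp add: comp_assoc)
  qed
  have fx: "f * xz = - e * u N" using z by (simp add: N_def algebra_simps add_eq_0_iff2)
  have h: "(t*u N - u j)/(u N - u j) * (e*u j + f*xz) = e*u j + t*f*xz" if "j \<in> {1..n}" for j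
  proof -
    have "u N \<noteq> u j"
    proof
      assume eq: "u N = u j"
      have "Suc n = j" by (rule inj_onD[OF inj eq[unfolded N_def]]) (use that in auto)
      then show False using that by simp
    qed
    then have "u N - u j \<noteq> 0" by simp
    then have key: "(t*u N - u j)/(u N - u j) * (e*u j - e*u N) = e*u j - t*e*u N"
      by (simp add: field_simps)
    have e1: "e*u j + f*xz = e*u j - e*u N" using fx by simp
    have e2: "e*u j + t*f*xz = e*u j - t*e*u N" using fx by (simp add: mult.assoc)
    show ?thesis unfolding e1 e2 by (rule key)
  qed
  let ?K0 = "(\<Prod>j=1..n. e*u j + t*f*xz) * (\<Prod>k=1..n. a*u (Suc n) + b*w (Suc k))"
  have tm: "G N (u \<circ> (\<sigma>' \<circ> rho)) W = ?K0 * G n (u \<circ> \<sigma>') (\<lambda>k. w (Suc k))" if q: "\<sigma>' \<in> ?Q" for \<sigma>'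
  proof -
    let ?v = "u \<circ> (\<sigma>' \<circ> rho)"
    from q have qp: "\<sigma>' permutes {1..n}" by simp
    have v1: "?v 1 = u N" using rho1 permutes_not_in[OF qp] by (simp add: N_def)
    have vS: "?v (Suc k) = u (\<sigma>' k)" if "k \<in> {1..n}" for k using rhoS[OF that] by simp
    have A: "(\<Prod>k=1..n. (t*?v 1 - ?v (Suc k))/(?v 1 - ?v (Suc k))) * (\<Prod>j=1..n. e*?v (Suc j) + f*W 1)
        = (\<Prod>j=1..n. e*u j + t*f*xz)"
    proof -
      have "(\<Prod>k=1..n. (t*?v 1 - ?v (Suc k))/(?v 1 - ?v (Suc k))) * (\<Prod>j=1..n. e*?v (Suc j) + f*W 1)
          = (\<Prod>k=1..n. (t*u N - u (\<sigma>' k))/(u N - u (\<sigma>' k)) * (e*u (\<sigma>' k) + f*xz))"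
      proof -
        have 1: "(\<Prod>k=1..n. (t*?v 1 - ?v (Suc k))/(?v 1 - ?v (Suc k))) = (\<Prod>k=1..n. (t*u N - u (\<sigma>' k))/(u N - u (\<sigma>' k)))"
          by (rule prod.cong[OF refl]) (simp only: v1 vS)
        have 2: "(\<Prod>j=1..n. e*?v (Suc j) + f*W 1) = (\<Prod>k=1..n. e*u (\<sigma>' k) + f*xz)"
          by (rule prod.cong[OF refl]) (simp only: vS W_def fun_upd_same)
        show ?thesis unfolding 1 2 prod.distrib ..
      qed
      also have "\<dots> = (\<Prod>k=1..n. (t*u N - u k)/(u N - u k) * (e*u k + f*xz))"
        using prod.permute[OF qp, of "\<lambda>k. (t*u N - u k)/(u N - u k) * (e*u k + f*xz)"] by (simp add: o_def)
      also have "\<dots> = (\<Prod>j=1..n. e*u j + t*f*xz)" by (rule prod.cong[OF refl]) (rule h)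
      finally show ?thesis .
    qed
    have B: "(\<Prod>k=1..n. a*?v 1 + b*W (Suc k)) = (\<Prod>k=1..n. a*u (Suc n) + b*w (Suc k))"
    proof (rule prod.cong[OF refl])
      fix k assume k: "k \<in> {1..n}"
      then have "W (Suc k) = w (Suc k)" by (auto simp: W_def)
      then show "a*?v 1 + b*W (Suc k) = a*u (Suc n) + b*w (Suc k)" unfolding v1 N_def by simp
    qed
    have C: "G n (\<lambda>j. ?v (Suc j)) (\<lambda>k. W (Suc k)) = G n (u \<circ> \<sigma>') (\<lambda>k. w (Suc k))"
      by (rule G_cong) (auto simp: vS W_def rhoS)
    have "G N ?v W = (\<Prod>k=1..n. (t*?v 1 - ?v (Suc k))/(?v 1 - ?v (Suc k))) * (\<Prod>k=1..n. a*?v 1 + b*W (Suc k)) *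
        (\<Prod>j=1..n. e*?v (Suc j) + f*W 1) * G n (\<lambda>j. ?v (Suc j)) (\<lambda>k. W (Suc k))"
      unfolding N_def by (rule G_split)
    also have "\<dots> = ((\<Prod>k=1..n. (t*?v 1 - ?v (Suc k))/(?v 1 - ?v (Suc k))) * (\<Prod>j=1..n. e*?v (Suc j) + f*W 1)) *
        (\<Prod>k=1..n. a*?v 1 + b*W (Suc k)) * G n (\<lambda>j. ?v (Suc j)) (\<lambda>k. W (Suc k))"
      by (simp only: mult.assoc mult.commute mult.left_commute)
    also have "\<dots> = ?K0 * G n (u \<circ> \<sigma>') (\<lambda>k. w (Suc k))"
      unfolding A B C by (simp only: mult.assoc)
    finally show ?thesis .
  qed
  have "(\<Sum>\<sigma>\<in>?P. G N (u \<circ> \<sigma>) W) = (\<Sum>\<sigma>'\<in>?Q. G N (u \<circ> (\<sigma>' \<circ> rho)) W)"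
    unfolding sum1 img by (subst sum.reindex[OF injr]) (simp add: o_def)
  also have "\<dots> = ?K0 * (\<Sum>\<sigma>'\<in>?Q. G n (u \<circ> \<sigma>') (\<lambda>k. w (Suc k)))"
    by (simp add: tm sum_distrib_left)
  finally have sums: "(\<Sum>\<sigma>\<in>?P. G N (u \<circ> \<sigma>) W) = ?K0 * (\<Sum>\<sigma>'\<in>?Q. G n (u \<circ> \<sigma>') (\<lambda>k. w (Suc k)))" .
  have pre: "(\<Prod>j=1..N. (1-t)*c*u j) = (\<Prod>j=1..n. (1-t)*c*u j) * ((1-t)*c*u (Suc n))"
    by (simp add: N_def atLeastAtMostSuc_conv mult.commute)
  show ?thesis
    unfolding S_def W_def[symmetric] N_def[symmetric] sums pre
    by (simp only: mult.assoc mult.commute mult.left_commute)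
qed


lemma ZN_0: "ZN t a b c d e f 0 u w = 1"
  by (simp add: ZN_def)

lemma ZS:
  assumes h1: "c*d + a*f = 0" and h2: "t*c*d + b*e = 0" and ha: "a \<noteq> 0" and hb: "b \<noteq> 0"
    and he: "e \<noteq> 0" and hf: "f \<noteq> 0"
  shows "inj_on u {1..N} \<Longrightarrow> ZN t a b c d e f N u w = S N u w"
proof (induction N arbitrary: u w)
  case 0
  show ?case by (simp add: ZN_0 S_0)
next
  case (Suc n)
  define D where "D = (\<lambda>x. ZN t a b c d e f (Suc n) u (w(1:=x)) - S (Suc n) u (w(1:=x)))"
  have pD: "polyn n D" unfolding D_def by (rule polyn_diff[OF ZN_poly S_poly])
  let ?A = "(\<lambda>j. - e * u j / f) ` {1..Suc n}"
  have injA: "inj_on (\<lambda>j. - e * u j / f) {1..Suc n}"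
  proof (rule inj_onI)
    fix j k assume jk: "j \<in> {1..Suc n}" "k \<in> {1..Suc n}" "- e * u j / f = - e * u k / f"
    then have "u j = u k" using he hf by (simp add: field_simps)
    then show "j = k" using Suc.prems jk by (auto dest: inj_onD)
  qed
  have cardA: "card ?A = Suc n" using card_image[OF injA] by simp
  have roots: "D x = 0" if "x \<in> ?A" for x
  proof -
    from that obtain j where j: "j \<in> {1..Suc n}" "x = - e * u j / f" by auto
    let ?tau = "Transposition.transpose j (Suc n)"
    have tau: "?tau permutes {1..Suc n}" by (rule permutes_swap_id) (use j in auto)
    let ?u' = "u \<circ> ?tau"
    have u'N: "?u' (Suc n) = u j" by simp
    have z: "e * ?u' (Suc n) + f * x = 0" using hf by (simp add: j(2) u'N field_simps)
    have inj': "inj_on ?u' {1..Suc n}"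
    proof (rule comp_inj_on)
      show "inj_on ?tau {1..Suc n}" using permutes_inj_on[OF tau] .
      show "inj_on u (?tau ` {1..Suc n})" using Suc.prems permutes_image[OF tau] by simp
    qed
    have injn: "inj_on ?u' {1..n}" by (rule inj_on_subset[OF inj']) auto
    have "ZN t a b c d e f (Suc n) u (w(1:=x)) = ZN t a b c d e f (Suc n) ?u' (w(1:=x))"
      by (rule ZN_perm[OF h1 h2 ha hb tau, symmetric])
    also have "\<dots> = (\<Prod>j=1..n. e*?u' j + t*f*x) * ((1-t)*c*?u' (Suc n)) *
     (\<Prod>k=1..n. a*?u' (Suc n) + b*w (Suc k)) * ZN t a b c d e f n ?u' (\<lambda>k. w (Suc k))"
      by (rule Z_frozen[where u="u \<circ> Transposition.transpose j (Suc n)" and n=n and xz=x and w=w, OF z])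
    also have "ZN t a b c d e f n ?u' (\<lambda>k. w (Suc k)) = S n ?u' (\<lambda>k. w (Suc k))"
      by (rule Suc.IH[OF injn])
    also have "(\<Prod>j=1..n. e*?u' j + t*f*x) * ((1-t)*c*?u' (Suc n)) *
     (\<Prod>k=1..n. a*?u' (Suc n) + b*w (Suc k)) * S n ?u' (\<lambda>k. w (Suc k)) = S (Suc n) ?u' (w(1:=x))"
      by (rule S_frozen[where u="u \<circ> Transposition.transpose j (Suc n)" and n=n and xz=x and w=w, OF z inj', symmetric])
    also have "\<dots> = S (Suc n) u (w(1:=x))" by (rule S_perm[OF tau])
    finally show "D x = 0" unfolding D_def by (simp add: fun_upd_def)
  qed
  have "D (w 1) = 0"
    by (rule polyn_zero[OF pD, where A="?A"]) (use cardA roots in auto)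
  then show ?case unfolding D_def by simp
qed


lemma swap_ratio:
  fixes A B :: complex
  assumes n1: "B - A \<noteq> 0" and n2: "t*B - A \<noteq> 0"
  shows "(t*A - B)/(A - B) = (t*B - A)/(B - A) * ((B - t*A)/(t*B - A))"
proof -
  have "(t*B - A)/(B - A) * ((B - t*A)/(t*B - A)) = (B - t*A)/(B - A)"
    using n2 by simp
  also have "\<dots> = (t*A - B)/(A - B)"
    by (metis minus_diff_eq minus_divide_divide)
  finally show ?thesis by simp
qed

lemma inv_prod:
  assumes sp: "\<sigma> permutes {1..N}"
    and du: "\<And>j k. j \<in> {1..N} \<Longrightarrow> k \<in> {1..N} \<Longrightarrow> j < k \<Longrightarrow> u j \<noteq> u k"
    and dt: "\<And>j k. j \<in> {1..N} \<Longrightarrow> k \<in> {1..N} \<Longrightarrow> j < k \<Longrightarrow> t * u j \<noteq> u k"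
  shows "(\<Prod>j=1..N. \<Prod>k\<in>{j<..N}. (t*u (\<sigma> j) - u (\<sigma> k))/(u (\<sigma> j) - u (\<sigma> k))) =
    (\<Prod>j=1..N. \<Prod>k\<in>{j<..N}. (t*u j - u k)/(u j - u k)) *
    (\<Prod>(j,k)\<in>Inv N \<sigma>. (u (\<sigma> k) - t*u (\<sigma> j)) / (t*u (\<sigma> k) - u (\<sigma> j)))"
proof -
  define g where "g = (\<lambda>(p::nat,q::nat). (t*u p - u q)/(u p - u q))"
  define r where "r = (\<lambda>(j::nat,k::nat). (u (\<sigma> k) - t*u (\<sigma> j)) / (t*u (\<sigma> k) - u (\<sigma> j)))"
  define Pairs where "Pairs = Sigma {1..N} (\<lambda>j. {j<..N})"
  define phi where "phi = (\<lambda>(j,k). if \<sigma> j < \<sigma> k then (\<sigma> j, \<sigma> k) else (\<sigma> k, \<sigma> j))"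
  have finP: "finite Pairs" by (simp add: Pairs_def)
  have nest: "(\<Prod>j=1..N. \<Prod>k\<in>{j<..N}. F j k) = (\<Prod>(j,k)\<in>Pairs. F j k)" for F :: "nat \<Rightarrow> nat \<Rightarrow> complex"
    by (simp add: Pairs_def prod.Sigma)
  have invsub: "Inv N \<sigma> \<subseteq> Pairs" by (auto simp: Inv_def Pairs_def)
  have sinj: "inj_on \<sigma> {1..N}" by (rule permutes_inj_on[OF sp])
  have sin: "\<sigma> j \<in> {1..N}" if "j \<in> {1..N}" for j using permutes_in_image[OF sp] that by simp
  have neq: "\<sigma> j \<noteq> \<sigma> k" if "(j,k) \<in> Pairs" for j k
  proof
    assume "\<sigma> j = \<sigma> k"
    then have "j = k" using inj_onD[OF sinj] that by (auto simp: Pairs_def)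
    then show False using that by (auto simp: Pairs_def)
  qed
  have phiP: "phi ` Pairs \<subseteq> Pairs"
  proof (rule image_subsetI)
    fix p assume pP: "p \<in> Pairs"
    obtain j k where pjk: "p = (j,k)" by (cases p)
    with pP have jk: "(j,k) \<in> Pairs" by simp
    then have jm: "j \<in> {1..N}" and km: "k \<in> {1..N}" by (auto simp: Pairs_def)
    have "\<sigma> j \<in> {1..N}" "\<sigma> k \<in> {1..N}" using sin[OF jm] sin[OF km] by auto
    then show "phi p \<in> Pairs" unfolding pjk using neq[OF jk] by (auto simp: phi_def Pairs_def)
  qed
  have phiinj: "inj_on phi Pairs"
  proof (rule inj_onI, clarify)
    fix j k j' k' assume p: "(j,k) \<in> Pairs" "(j',k') \<in> Pairs" and eq: "phi (j,k) = phi (j',k')"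
    have m: "j \<in> {1..N}" "k \<in> {1..N}" "j' \<in> {1..N}" "k' \<in> {1..N}" "j < k" "j' < k'"
      using p by (auto simp: Pairs_def)
    have I: "x = y" if "\<sigma> x = \<sigma> y" "x \<in> {1..N}" "y \<in> {1..N}" for x y using inj_onD[OF sinj] that by blast
    show "j = j' \<and> k = k'"
    proof (cases "\<sigma> j < \<sigma> k"; cases "\<sigma> j' < \<sigma> k'")
      assume "\<sigma> j < \<sigma> k" "\<sigma> j' < \<sigma> k'"
      then show ?thesis using eq m I by (auto simp: phi_def)
    next
      assume "\<sigma> j < \<sigma> k" "\<not> \<sigma> j' < \<sigma> k'"
      with eq have "\<sigma> j = \<sigma> k'" "\<sigma> k = \<sigma> j'" by (auto simp: phi_def)
      then have "j = k'" "k = j'" using I m by auto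
      then show ?thesis using m by simp
    next
      assume "\<not> \<sigma> j < \<sigma> k" "\<sigma> j' < \<sigma> k'"
      with eq have "\<sigma> k = \<sigma> j'" "\<sigma> j = \<sigma> k'" by (auto simp: phi_def)
      then have "j = k'" "k = j'" using I m by auto
      then show ?thesis using m by simp
    next
      assume "\<not> \<sigma> j < \<sigma> k" "\<not> \<sigma> j' < \<sigma> k'"
      then show ?thesis using eq m I by (auto simp: phi_def)
    qed
  qed
  have phiimg: "phi ` Pairs = Pairs" by (rule endo_inj_surj[OF finP phiP phiinj])
  have reidx: "(\<Prod>p\<in>Pairs. g (phi p)) = (\<Prod>p\<in>Pairs. g p)"
    using prod.reindex[OF phiinj, of g] phiimg by (simp add: o_def)
  have pw: "g (\<sigma> j, \<sigma> k) = g (phi (j,k)) * (if (j,k) \<in> Inv N \<sigma> then r (j,k) else 1)" if jk: "(j,k) \<in> Pairs" for j k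
  proof (cases "\<sigma> j < \<sigma> k")
    case True
    then have "(j,k) \<notin> Inv N \<sigma>" by (auto simp: Inv_def)
    then show ?thesis using True by (simp add: phi_def)
  next
    case False
    with neq[OF jk] have lt: "\<sigma> k < \<sigma> j" by simp
    have m: "j \<in> {1..N}" "k \<in> {1..N}" "j < k" using jk by (auto simp: Pairs_def)
    then have inv: "(j,k) \<in> Inv N \<sigma>" using lt by (auto simp: Inv_def)
    have sm: "\<sigma> j \<in> {1..N}" "\<sigma> k \<in> {1..N}" using sin[OF m(1)] sin[OF m(2)] by auto
    have n1: "u (\<sigma> k) - u (\<sigma> j) \<noteq> 0" using du[OF sm(2) sm(1) lt] by simp
    have n2: "t * u (\<sigma> k) - u (\<sigma> j) \<noteq> 0" using dt[OF sm(2) sm(1) lt] by simp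
    have "g (\<sigma> j, \<sigma> k) = g (\<sigma> k, \<sigma> j) * r (j,k)"
      unfolding g_def r_def case_prod_conv by (rule swap_ratio[OF n1 n2])
    then show ?thesis using False inv by (simp add: phi_def)
  qed
  have "(\<Prod>j=1..N. \<Prod>k\<in>{j<..N}. (t*u (\<sigma> j) - u (\<sigma> k))/(u (\<sigma> j) - u (\<sigma> k))) = (\<Prod>p\<in>Pairs. g (\<sigma> (fst p), \<sigma> (snd p)))"
    unfolding nest by (simp add: g_def case_prod_beta)
  also have "\<dots> = (\<Prod>p\<in>Pairs. g (phi p) * (if p \<in> Inv N \<sigma> then r p else 1))"
    by (rule prod.cong[OF refl]) (auto simp: pw)
  also have "\<dots> = (\<Prod>p\<in>Pairs. g p) * (\<Prod>p\<in>Pairs. (if p \<in> Inv N \<sigma> then r p else 1))"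
    by (simp add: prod.distrib reidx)
  also have "(\<Prod>p\<in>Pairs. (if p \<in> Inv N \<sigma> then r p else 1)) = (\<Prod>p\<in>Inv N \<sigma>. r p)"
    using prod.inter_restrict[OF finP, of r "Inv N \<sigma>"] invsub by (simp add: Int_absorb1)
  also have "(\<Prod>p\<in>Pairs. g p) = (\<Prod>j=1..N. \<Prod>k\<in>{j<..N}. (t*u j - u k)/(u j - u k))"
    unfolding nest by (simp add: g_def case_prod_beta)
  finally show ?thesis by (simp add: r_def case_prod_beta)
qed

lemma final_ctx:
  fixes N :: nat and u w :: "nat \<Rightarrow> complex"
  assumes "a \<noteq> 0" "b \<noteq> 0" "c \<noteq> 0" "d \<noteq> 0" "e \<noteq> 0" "f \<noteq> 0" "t \<noteq> 1"
    and "c*d + a*f = 0" and "t*c*d + b*e = 0"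
    and "N \<ge> 1"
    and du: "\<And>j k. j \<in> {1..N} \<Longrightarrow> k \<in> {1..N} \<Longrightarrow> j < k \<Longrightarrow> u j \<noteq> u k"
    and dt: "\<And>j k. j \<in> {1..N} \<Longrightarrow> k \<in> {1..N} \<Longrightarrow> j < k \<Longrightarrow> t * u j \<noteq> u k"
  shows "ZN t a b c d e f N u w =
    (\<Prod>j=1..N. (1-t)*c*u j) *
    (\<Prod>j=1..N. \<Prod>k\<in>{j<..N}. (t*u j - u k) / (u j - u k)) *
    (\<Sum>\<sigma> | \<sigma> permutes {1..N}.
        (\<Prod>(j,k)\<in>Inv N \<sigma>. (u (\<sigma> k) - t*u (\<sigma> j)) / (t*u (\<sigma> k) - u (\<sigma> j))) *
        (\<Prod>j=1..N. \<Prod>k\<in>{j<..N}. a*u (\<sigma> j) + b*w k) *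
        (\<Prod>j=1..N. \<Prod>k\<in>{1..<j}. e*u (\<sigma> j) + f*w k))"
proof -
  have inj: "inj_on u {1..N}"
  proof (rule inj_onI)
    fix j k assume jk: "j \<in> {1..N}" "k \<in> {1..N}" "u j = u k"
    show "j = k"
    proof (rule ccontr)
      assume "j \<noteq> k"
      then consider "j < k" | "k < j" by linarith
      then show False using du jk by cases (auto, metis)
    qed
  qed
  have "ZN t a b c d e f N u w = S N u w"
    by (rule ZS[OF assms(8) assms(9) assms(1) assms(2) assms(5) assms(6) inj])
  also have "\<dots> = (\<Prod>j=1..N. (1-t)*c*u j) *
    (\<Sum>\<sigma> | \<sigma> permutes {1..N}. (\<Prod>j=1..N. \<Prod>k\<in>{j<..N}. (t*u j - u k) / (u j - u k)) *
        ((\<Prod>(j,k)\<in>Inv N \<sigma>. (u (\<sigma> k) - t*u (\<sigma> j)) / (t*u (\<sigma> k) - u (\<sigma> j))) *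
        (\<Prod>j=1..N. \<Prod>k\<in>{j<..N}. a*u (\<sigma> j) + b*w k) *
        (\<Prod>j=1..N. \<Prod>k\<in>{1..<j}. e*u (\<sigma> j) + f*w k)))"
    unfolding S_def
  proof (intro arg_cong2[where f="(*)"] refl sum.cong)
    fix \<sigma> assume "\<sigma> \<in> {\<sigma>. \<sigma> permutes {1..N}}"
    then have sp: "\<sigma> permutes {1..N}" by simp
    show "G N (u \<circ> \<sigma>) w = (\<Prod>j=1..N. \<Prod>k\<in>{j<..N}. (t*u j - u k) / (u j - u k)) *
        ((\<Prod>(j,k)\<in>Inv N \<sigma>. (u (\<sigma> k) - t*u (\<sigma> j)) / (t*u (\<sigma> k) - u (\<sigma> j))) *
        (\<Prod>j=1..N. \<Prod>k\<in>{j<..N}. a*u (\<sigma> j) + b*w k) *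
        (\<Prod>j=1..N. \<Prod>k\<in>{1..<j}. e*u (\<sigma> j) + f*w k))"
    proof -
      have gg: "G N (u \<circ> \<sigma>) w = (\<Prod>j=1..N. \<Prod>k\<in>{j<..N}. (t*u (\<sigma> j) - u (\<sigma> k))/(u (\<sigma> j) - u (\<sigma> k))) *
        (\<Prod>j=1..N. \<Prod>k\<in>{j<..N}. a*u (\<sigma> j) + b*w k) *
        (\<Prod>j=1..N. \<Prod>k\<in>{1..<j}. e*u (\<sigma> j) + f*w k)"
        by (simp add: G_def)
      have ip: "(\<Prod>j=1..N. \<Prod>k\<in>{j<..N}. (t*u (\<sigma> j) - u (\<sigma> k))/(u (\<sigma> j) - u (\<sigma> k))) =
        (\<Prod>j=1..N. \<Prod>k\<in>{j<..N}. (t*u j - u k)/(u j - u k)) *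
        (\<Prod>(j,k)\<in>Inv N \<sigma>. (u (\<sigma> k) - t*u (\<sigma> j)) / (t*u (\<sigma> k) - u (\<sigma> j)))"
        by (rule inv_prod[OF sp du dt])
      show ?thesis unfolding gg ip by (simp only: mult.assoc)
    qed
  qed
  also have "\<dots> = (\<Prod>j=1..N. (1-t)*c*u j) *
    (\<Prod>j=1..N. \<Prod>k\<in>{j<..N}. (t*u j - u k) / (u j - u k)) *
    (\<Sum>\<sigma> | \<sigma> permutes {1..N}.
        (\<Prod>(j,k)\<in>Inv N \<sigma>. (u (\<sigma> k) - t*u (\<sigma> j)) / (t*u (\<sigma> k) - u (\<sigma> j))) *
        (\<Prod>j=1..N. \<Prod>k\<in>{j<..N}. a*u (\<sigma> j) + b*w k) *
        (\<Prod>j=1..N. \<Prod>k\<in>{1..<j}. e*u (\<sigma> j) + f*w k))"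
    by (simp only: sum_distrib_left[symmetric] mult.assoc)
  finally show ?thesis .
qed

end

theorem mainTheorem5:
  fixes t a b c d e f :: complex and N :: nat and u w :: "nat \<Rightarrow> complex"
  assumes "a \<noteq> 0" "b \<noteq> 0" "c \<noteq> 0" "d \<noteq> 0" "e \<noteq> 0" "f \<noteq> 0" "t \<noteq> 1"
    and "c*d + a*f = 0" and "t*c*d + b*e = 0"
    and "N \<ge> 1"
    and "\<And>j k. j \<in> {1..N} \<Longrightarrow> k \<in> {1..N} \<Longrightarrow> j < k \<Longrightarrow> u j \<noteq> u k"
    and "\<And>j k. j \<in> {1..N} \<Longrightarrow> k \<in> {1..N} \<Longrightarrow> j < k \<Longrightarrow> t * u j \<noteq> u k"
  shows "ZN t a b c d e f N u w =
    (\<Prod>j=1..N. (1-t)*c*u j) *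
    (\<Prod>j=1..N. \<Prod>k\<in>{j<..N}. (t*u j - u k) / (u j - u k)) *
    (\<Sum>\<sigma> | \<sigma> permutes {1..N}.
        (\<Prod>(j,k)\<in>Inv N \<sigma>. (u (\<sigma> k) - t*u (\<sigma> j)) / (t*u (\<sigma> k) - u (\<sigma> j))) *
        (\<Prod>j=1..N. \<Prod>k\<in>{j<..N}. a*u (\<sigma> j) + b*w k) *
        (\<Prod>j=1..N. \<Prod>k\<in>{1..<j}. e*u (\<sigma> j) + f*w k))"
  by (rule final_ctx[OF assms])

end
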